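(* Consider the two-dimensional minimal surface equation $$\mathcal{E}_{\min\Sigma}=\{(1+u_y^2)u_{xx}-2u_xu_yu_{xy}+(1+u_x^2)u_{yy}=0\}$$ for $u=u(x,y)$. The Lie algebra of (generating sections of) contact symmetries of $\mathcal{E}_{\min\Sigma}$ is generated by all solutions $\varphi(u_x,u_y)$ of the equation $$(1+u_x^2)\frac{\partial^2\varphi}{\partial u_x^2}+2u_xu_y\frac{\partial^2\varphi}{\partial u_x\partial u_y}+(1+u_y^2)\frac{\partial^2\varphi}{\partial u_y^2}=0$$ together with the sections $\varphi_3^{12}=yu_x-xu_y$, $\bar\varphi_3^1=x+uu_x$, $\bar\varphi_3^2=y+uu_y$, and $\varphi_4=u-xu_x-yu_y$.
   Context: A contact symmetry of $\mathcal{E}_{\min\Sigma}=\{F=0\}$ is given by its generating section $\varphi=\varphi(x,y,u,u_x,u_y)$ satisfying the linearized equation $\ell_F(\varphi)=0$ on the infinite prolongation $\mathcal{E}_{\min\Sigma}^\infty$, where $\ell_F=\sum_\sigma \frac{\partial F}{\partial u_\sigma}D_\sigma$ and $D_\sigma$ are compositions of total derivatives. The Lie bracket is the Jacobi bracket $\{\varphi',\varphi''\}=\mathfrak{D}_{\varphi'}(\varphi'')-\mathfrak{D}_{\varphi''}(\varphi')$, with $\mathfrak{D}_\varphi=\sum_\sigma D_\sigma(\varphi)\partial/\partial u_\sigma$. *)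

theory Defs
  imports "HOL-Analysis.Analysis"
begin

text \<open>Functions of the first-order jet coordinates (x, y, u, p = u_x, q = u_y).\<close>
type_synonym fn5 = "real \<Rightarrow> real \<Rightarrow> real \<Rightarrow> real \<Rightarrow> real \<Rightarrow> real"

definition pX :: "fn5 \<Rightarrow> fn5" where
  "pX f = (\<lambda>x y u p q. deriv (\<lambda>v. f v y u p q) x)"
definition pY :: "fn5 \<Rightarrow> fn5" where
  "pY f = (\<lambda>x y u p q. deriv (\<lambda>v. f x v u p q) y)"
definition pU :: "fn5 \<Rightarrow> fn5" where
  "pU f = (\<lambda>x y u p q. deriv (\<lambda>v. f x y v p q) u)"
definition pP :: "fn5 \<Rightarrow> fn5" where
  "pP f = (\<lambda>x y u p q. deriv (\<lambda>v. f x y u v q) p)"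
definition pQ :: "fn5 \<Rightarrow> fn5" where
  "pQ f = (\<lambda>x y u p q. deriv (\<lambda>v. f x y u p v) q)"

definition cont5 :: "fn5 \<Rightarrow> bool" where
  "cont5 f \<longleftrightarrow> continuous_on UNIV (\<lambda>(x, y, u, p, q). f x y u p q)"

definition partials_exist :: "fn5 \<Rightarrow> bool" where
  "partials_exist f \<longleftrightarrow> (\<forall>x y u p q.
      (\<lambda>v. f v y u p q) differentiable (at x) \<and>
      (\<lambda>v. f x v u p q) differentiable (at y) \<and>
      (\<lambda>v. f x y v p q) differentiable (at u) \<and>
      (\<lambda>v. f x y u v q) differentiable (at p) \<and>
      (\<lambda>v. f x y u p v) differentiable (at q))"

fun Ck :: "nat \<Rightarrow> fn5 \<Rightarrow> bool" where
  "Ck 0 f = cont5 f"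
| "Ck (Suc k) f = (cont5 f \<and> partials_exist f \<and>
      Ck k (pX f) \<and> Ck k (pY f) \<and> Ck k (pU f) \<and> Ck k (pP f) \<and> Ck k (pQ f))"

definition smooth5 :: "fn5 \<Rightarrow> bool" where
  "smooth5 f \<longleftrightarrow> (\<forall>k. Ck k f)"

text \<open>The minimal surface equation F(p,q,r,s,t) with r = u_xx, s = u_xy, t = u_yy,
  and its total derivatives (a = u_xxx, b = u_xxy, c = u_xyy, d = u_yyy).\<close>
definition Fms :: "real \<Rightarrow> real \<Rightarrow> real \<Rightarrow> real \<Rightarrow> real \<Rightarrow> real" where
  "Fms p q r s t = (1 + q^2) * r - 2 * p * q * s + (1 + p^2) * t"

definition DxF :: "real \<Rightarrow> real \<Rightarrow> real \<Rightarrow> real \<Rightarrow> real \<Rightarrow> real \<Rightarrow> real \<Rightarrow> real \<Rightarrow> real" where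
  "DxF p q r s t a b c =
     2 * q * s * r + (1 + q^2) * a - 2 * (r * q * s + p * s * s + p * q * b)
     + 2 * p * r * t + (1 + p^2) * c"

definition DyF :: "real \<Rightarrow> real \<Rightarrow> real \<Rightarrow> real \<Rightarrow> real \<Rightarrow> real \<Rightarrow> real \<Rightarrow> real \<Rightarrow> real" where
  "DyF p q r s t b c d =
     2 * q * t * r + (1 + q^2) * b - 2 * (s * q * s + p * t * s + p * q * c)
     + 2 * p * s * t + (1 + p^2) * d"

definition Dx1 :: "fn5 \<Rightarrow> real \<Rightarrow> real \<Rightarrow> real \<Rightarrow> real \<Rightarrow> real \<Rightarrow> real \<Rightarrow> real \<Rightarrow> real" where
  "Dx1 g x y u p q r s =
     pX g x y u p q + p * pU g x y u p q + r * pP g x y u p q + s * pQ g x y u p q"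

definition Dy1 :: "fn5 \<Rightarrow> real \<Rightarrow> real \<Rightarrow> real \<Rightarrow> real \<Rightarrow> real \<Rightarrow> real \<Rightarrow> real \<Rightarrow> real" where
  "Dy1 g x y u p q s t =
     pY g x y u p q + q * pU g x y u p q + s * pP g x y u p q + t * pQ g x y u p q"

definition Dxx :: "fn5 \<Rightarrow> real \<Rightarrow> real \<Rightarrow> real \<Rightarrow> real \<Rightarrow> real \<Rightarrow> real \<Rightarrow> real \<Rightarrow> real \<Rightarrow> real \<Rightarrow> real" where
  "Dxx g x y u p q r s a b =
     Dx1 (pX g) x y u p q r s
     + r * pU g x y u p q + p * Dx1 (pU g) x y u p q r s
     + a * pP g x y u p q + r * Dx1 (pP g) x y u p q r s
     + b * pQ g x y u p q + s * Dx1 (pQ g) x y u p q r s"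

definition Dxy :: "fn5 \<Rightarrow> real \<Rightarrow> real \<Rightarrow> real \<Rightarrow> real \<Rightarrow> real \<Rightarrow> real \<Rightarrow> real \<Rightarrow> real \<Rightarrow> real \<Rightarrow> real \<Rightarrow> real" where
  "Dxy g x y u p q r s t b c =
     Dx1 (pY g) x y u p q r s
     + s * pU g x y u p q + q * Dx1 (pU g) x y u p q r s
     + b * pP g x y u p q + s * Dx1 (pP g) x y u p q r s
     + c * pQ g x y u p q + t * Dx1 (pQ g) x y u p q r s"

definition Dyy :: "fn5 \<Rightarrow> real \<Rightarrow> real \<Rightarrow> real \<Rightarrow> real \<Rightarrow> real \<Rightarrow> real \<Rightarrow> real \<Rightarrow> real \<Rightarrow> real \<Rightarrow> real" where
  "Dyy g x y u p q s t c d =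
     Dy1 (pY g) x y u p q s t
     + t * pU g x y u p q + q * Dy1 (pU g) x y u p q s t
     + c * pP g x y u p q + s * Dy1 (pP g) x y u p q s t
     + d * pQ g x y u p q + t * Dy1 (pQ g) x y u p q s t"

text \<open>Linearization l_F(phi) = sum_sigma (dF/du_sigma) D_sigma phi of the minimal surface
  equation, evaluated at a third-order jet point.\<close>
definition ellF :: "fn5 \<Rightarrow> real \<Rightarrow> real \<Rightarrow> real \<Rightarrow> real \<Rightarrow> real \<Rightarrow> real \<Rightarrow> real \<Rightarrow> real
                    \<Rightarrow> real \<Rightarrow> real \<Rightarrow> real \<Rightarrow> real \<Rightarrow> real" where
  "ellF g x y u p q r s t a b c d =
     (1 + q^2) * Dxx g x y u p q r s a b
     - 2 * p * q * Dxy g x y u p q r s t b c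
     + (1 + p^2) * Dyy g x y u p q s t c d
     + (2 * p * t - 2 * q * s) * Dx1 g x y u p q r s
     + (2 * q * r - 2 * p * s) * Dy1 g x y u p q s t"

text \<open>Generating sections of contact symmetries: smooth phi(x,y,u,u_x,u_y) with
  l_F(phi) = 0 on the infinite prolongation.  Since l_F(phi) involves jets only up to
  order three, this means vanishing at every third-order jet point satisfying
  F = 0, D_x F = 0, D_y F = 0.\<close>
definition contact_symmetry :: "fn5 \<Rightarrow> bool" where
  "contact_symmetry g \<longleftrightarrow> smooth5 g \<and>
     (\<forall>x y u p q r s t a b c d.
        Fms p q r s t = 0 \<and> DxF p q r s t a b c = 0 \<and> DyF p q r s t b c d = 0
        \<longrightarrow> ellF g x y u p q r s t a b c d = 0)"

definition pq_solution :: "fn5 \<Rightarrow> bool" where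
  "pq_solution g \<longleftrightarrow> smooth5 g \<and> (\<exists>h. g = (\<lambda>x y u p q. h p q)) \<and>
     (\<forall>x y u p q. (1 + p^2) * pP (pP g) x y u p q + 2 * p * q * pQ (pP g) x y u p q
                    + (1 + q^2) * pQ (pQ g) x y u p q = 0)"

end

theory Submission
  imports Defs "HOL-Library.Function_Algebras"
begin

section \<open>Coordinates and constants\<close>

definition cX :: fn5 where "cX = (\<lambda>x y u p q. x)"
definition cY :: fn5 where "cY = (\<lambda>x y u p q. y)"
definition cU :: fn5 where "cU = (\<lambda>x y u p q. u)"
definition cP :: fn5 where "cP = (\<lambda>x y u p q. p)"
definition cQ :: fn5 where "cQ = (\<lambda>x y u p q. q)"
definition cst :: "real \<Rightarrow> fn5" where "cst c = (\<lambda>x y u p q. c)"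

lemma coord_apply[simp]: "cX x y u p q = x" "cY x y u p q = y" "cU x y u p q = u"
  "cP x y u p q = p" "cQ x y u p q = q" "cst c x y u p q = c"
  by (simp_all add: cX_def cY_def cU_def cP_def cQ_def cst_def)

lemma fun_apply5[simp]:
  fixes f g :: fn5
  shows "(f + g) x y u p q = f x y u p q + g x y u p q"
    "(f - g) x y u p q = f x y u p q - g x y u p q"
    "(f * g) x y u p q = f x y u p q * g x y u p q"
    "(- f) x y u p q = - f x y u p q"
    "(0::fn5) x y u p q = 0" "(1::fn5) x y u p q = 1"
    "(numeral n :: fn5) x y u p q = numeral n"
  by simp_all

lemma fn5_eqI: "(\<And>x y u p q. f x y u p q = g x y u p q) \<Longrightarrow> f = (g::fn5)"
  by (intro ext)

section \<open>Continuity\<close>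

definition unc :: "fn5 \<Rightarrow> real \<times> real \<times> real \<times> real \<times> real \<Rightarrow> real" where
  "unc f = (\<lambda>(x, y, u, p, q). f x y u p q)"

lemma cont5_unc: "cont5 f \<longleftrightarrow> continuous_on UNIV (unc f)"
  by (simp add: cont5_def unc_def)

lemma unc_add: "unc (f + g) = (\<lambda>z. unc f z + unc g z)"
  and unc_mult: "unc (f * g) = (\<lambda>z. unc f z * unc g z)"
  and unc_minus: "unc (- f) = (\<lambda>z. - unc f z)"
  and unc_diff: "unc (f - g) = (\<lambda>z. unc f z - unc g z)"
  by (auto simp: unc_def fun_eq_iff split: prod.splits)

lemma cont5_add: "cont5 f \<Longrightarrow> cont5 g \<Longrightarrow> cont5 (f + g)"
  and cont5_mult: "cont5 f \<Longrightarrow> cont5 g \<Longrightarrow> cont5 (f * g)"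
  and cont5_minus: "cont5 f \<Longrightarrow> cont5 (- f)"
  and cont5_diff: "cont5 f \<Longrightarrow> cont5 g \<Longrightarrow> cont5 (f - g)"
  unfolding cont5_unc unc_add unc_mult unc_minus unc_diff
  by (auto intro!: continuous_intros)

lemma unc_coord: "unc cX = fst" "unc cY = (\<lambda>z. fst (snd z))" "unc cU = (\<lambda>z. fst (snd (snd z)))"
  "unc cP = (\<lambda>z. fst (snd (snd (snd z))))" "unc cQ = (\<lambda>z. snd (snd (snd (snd z))))"
  "unc (cst c) = (\<lambda>z. c)" "unc 0 = (\<lambda>z. 0)" "unc 1 = (\<lambda>z. 1)" "unc (numeral n) = (\<lambda>z. numeral n)"
  by (auto simp: unc_def fun_eq_iff split: prod.splits)

lemma cont5_coord: "cont5 cX" "cont5 cY" "cont5 cU" "cont5 cP" "cont5 cQ" "cont5 (cst c)"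
  "cont5 0" "cont5 1" "cont5 (numeral n)"
  unfolding cont5_unc unc_coord by (auto intro!: continuous_intros)

section \<open>Partial derivatives as derivatives\<close>

lemma DERIV_mult': assumes "(f has_real_derivative Df) (at x)" "(g has_real_derivative Dg) (at x)"
  shows "((\<lambda>v. f v * g v) has_real_derivative (Df * g x + f x * Dg)) (at x)"
  using DERIV_mult[OF assms] by (simp add: mult.commute)

lemma pX_D: "(\<lambda>v. f v y u p q) differentiable (at x) \<Longrightarrow> ((\<lambda>v. f v y u p q) has_real_derivative pX f x y u p q) (at x)"
  unfolding pX_def using DERIV_deriv_iff_real_differentiable by blast
lemma pY_D: "(\<lambda>v. f x v u p q) differentiable (at y) \<Longrightarrow> ((\<lambda>v. f x v u p q) has_real_derivative pY f x y u p q) (at y)"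
  unfolding pY_def using DERIV_deriv_iff_real_differentiable by blast
lemma pU_D: "(\<lambda>v. f x y v p q) differentiable (at u) \<Longrightarrow> ((\<lambda>v. f x y v p q) has_real_derivative pU f x y u p q) (at u)"
  unfolding pU_def using DERIV_deriv_iff_real_differentiable by blast
lemma pP_D: "(\<lambda>v. f x y u v q) differentiable (at p) \<Longrightarrow> ((\<lambda>v. f x y u v q) has_real_derivative pP f x y u p q) (at p)"
  unfolding pP_def using DERIV_deriv_iff_real_differentiable by blast
lemma pQ_D: "(\<lambda>v. f x y u p v) differentiable (at q) \<Longrightarrow> ((\<lambda>v. f x y u p v) has_real_derivative pQ f x y u p q) (at q)"
  unfolding pQ_def using DERIV_deriv_iff_real_differentiable by blast

lemma pe_D:
  assumes "partials_exist f"
  shows "((\<lambda>v. f v y u p q) has_real_derivative pX f x y u p q) (at x)"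
    "((\<lambda>v. f x v u p q) has_real_derivative pY f x y u p q) (at y)"
    "((\<lambda>v. f x y v p q) has_real_derivative pU f x y u p q) (at u)"
    "((\<lambda>v. f x y u v q) has_real_derivative pP f x y u p q) (at p)"
    "((\<lambda>v. f x y u p v) has_real_derivative pQ f x y u p q) (at q)"
  using assms unfolding partials_exist_def
  by (blast intro: pX_D pY_D pU_D pP_D pQ_D)+

lemma D_pe:
  assumes "\<And>x y u p q. ((\<lambda>v. f v y u p q) has_real_derivative fx x y u p q) (at x)"
    "\<And>x y u p q. ((\<lambda>v. f x v u p q) has_real_derivative fy x y u p q) (at y)"
    "\<And>x y u p q. ((\<lambda>v. f x y v p q) has_real_derivative fu x y u p q) (at u)"
    "\<And>x y u p q. ((\<lambda>v. f x y u v q) has_real_derivative fp x y u p q) (at p)"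
    "\<And>x y u p q. ((\<lambda>v. f x y u p v) has_real_derivative fq x y u p q) (at q)"
  shows "partials_exist f" "pX f = fx" "pY f = fy" "pU f = fu" "pP f = fp" "pQ f = fq"
proof -
  show "partials_exist f" unfolding partials_exist_def
    using assms real_differentiable_def by meson
  show "pX f = fx" unfolding pX_def by (intro ext DERIV_imp_deriv assms)
  show "pY f = fy" unfolding pY_def by (intro ext DERIV_imp_deriv assms)
  show "pU f = fu" unfolding pU_def by (intro ext DERIV_imp_deriv assms)
  show "pP f = fp" unfolding pP_def by (intro ext DERIV_imp_deriv assms)
  show "pQ f = fq" unfolding pQ_def by (intro ext DERIV_imp_deriv assms)
qed

lemma pe_add: assumes f: "partials_exist f" and g: "partials_exist g" shows "partials_exist (f + g) \<and>
   pX (f + g) = pX f + pX g \<and> pY (f + g) = pY f + pY g \<and> pU (f + g) = pU f + pU g \<and>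
   pP (f + g) = pP f + pP g \<and> pQ (f + g) = pQ f + pQ g"
proof -
  have d1: "\<And>x y u p q. ((\<lambda>v. (f + g) v y u p q) has_real_derivative (pX f + pX g) x y u p q) (at x)"
    using DERIV_add[OF pe_D(1)[OF f] pe_D(1)[OF g]] by simp
  have d2: "\<And>x y u p q. ((\<lambda>v. (f + g) x v u p q) has_real_derivative (pY f + pY g) x y u p q) (at y)"
    using DERIV_add[OF pe_D(2)[OF f] pe_D(2)[OF g]] by simp
  have d3: "\<And>x y u p q. ((\<lambda>v. (f + g) x y v p q) has_real_derivative (pU f + pU g) x y u p q) (at u)"
    using DERIV_add[OF pe_D(3)[OF f] pe_D(3)[OF g]] by simp
  have d4: "\<And>x y u p q. ((\<lambda>v. (f + g) x y u v q) has_real_derivative (pP f + pP g) x y u p q) (at p)"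
    using DERIV_add[OF pe_D(4)[OF f] pe_D(4)[OF g]] by simp
  have d5: "\<And>x y u p q. ((\<lambda>v. (f + g) x y u p v) has_real_derivative (pQ f + pQ g) x y u p q) (at q)"
    using DERIV_add[OF pe_D(5)[OF f] pe_D(5)[OF g]] by simp
  from D_pe[of "f + g" "pX f + pX g" "pY f + pY g" "pU f + pU g" "pP f + pP g" "pQ f + pQ g", OF d1 d2 d3 d4 d5] show ?thesis by simp
qed

lemma pe_diff: assumes f: "partials_exist f" and g: "partials_exist g" shows "partials_exist (f - g) \<and>
   pX (f - g) = pX f - pX g \<and> pY (f - g) = pY f - pY g \<and> pU (f - g) = pU f - pU g \<and>
   pP (f - g) = pP f - pP g \<and> pQ (f - g) = pQ f - pQ g"
proof -
  have d1: "\<And>x y u p q. ((\<lambda>v. (f - g) v y u p q) has_real_derivative (pX f - pX g) x y u p q) (at x)"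
    using DERIV_diff[OF pe_D(1)[OF f] pe_D(1)[OF g]] by simp
  have d2: "\<And>x y u p q. ((\<lambda>v. (f - g) x v u p q) has_real_derivative (pY f - pY g) x y u p q) (at y)"
    using DERIV_diff[OF pe_D(2)[OF f] pe_D(2)[OF g]] by simp
  have d3: "\<And>x y u p q. ((\<lambda>v. (f - g) x y v p q) has_real_derivative (pU f - pU g) x y u p q) (at u)"
    using DERIV_diff[OF pe_D(3)[OF f] pe_D(3)[OF g]] by simp
  have d4: "\<And>x y u p q. ((\<lambda>v. (f - g) x y u v q) has_real_derivative (pP f - pP g) x y u p q) (at p)"
    using DERIV_diff[OF pe_D(4)[OF f] pe_D(4)[OF g]] by simp
  have d5: "\<And>x y u p q. ((\<lambda>v. (f - g) x y u p v) has_real_derivative (pQ f - pQ g) x y u p q) (at q)"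
    using DERIV_diff[OF pe_D(5)[OF f] pe_D(5)[OF g]] by simp
  from D_pe[of "f - g" "pX f - pX g" "pY f - pY g" "pU f - pU g" "pP f - pP g" "pQ f - pQ g", OF d1 d2 d3 d4 d5] show ?thesis by simp
qed

lemma pe_minus: assumes f: "partials_exist f"  shows "partials_exist (- f) \<and>
   pX (- f) = - pX f \<and> pY (- f) = - pY f \<and> pU (- f) = - pU f \<and>
   pP (- f) = - pP f \<and> pQ (- f) = - pQ f"
proof -
  have d1: "\<And>x y u p q. ((\<lambda>v. (- f) v y u p q) has_real_derivative (- pX f) x y u p q) (at x)"
    using DERIV_minus[OF pe_D(1)[OF f]] by simp
  have d2: "\<And>x y u p q. ((\<lambda>v. (- f) x v u p q) has_real_derivative (- pY f) x y u p q) (at y)"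
    using DERIV_minus[OF pe_D(2)[OF f]] by simp
  have d3: "\<And>x y u p q. ((\<lambda>v. (- f) x y v p q) has_real_derivative (- pU f) x y u p q) (at u)"
    using DERIV_minus[OF pe_D(3)[OF f]] by simp
  have d4: "\<And>x y u p q. ((\<lambda>v. (- f) x y u v q) has_real_derivative (- pP f) x y u p q) (at p)"
    using DERIV_minus[OF pe_D(4)[OF f]] by simp
  have d5: "\<And>x y u p q. ((\<lambda>v. (- f) x y u p v) has_real_derivative (- pQ f) x y u p q) (at q)"
    using DERIV_minus[OF pe_D(5)[OF f]] by simp
  from D_pe[of "- f" "- pX f" "- pY f" "- pU f" "- pP f" "- pQ f", OF d1 d2 d3 d4 d5] show ?thesis by simp
qed

lemma pe_mult: assumes f: "partials_exist f" and g: "partials_exist g" shows "partials_exist (f * g) \<and>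
   pX (f * g) = pX f * g + f * pX g \<and> pY (f * g) = pY f * g + f * pY g \<and> pU (f * g) = pU f * g + f * pU g \<and>
   pP (f * g) = pP f * g + f * pP g \<and> pQ (f * g) = pQ f * g + f * pQ g"
proof -
  have d1: "\<And>x y u p q. ((\<lambda>v. (f * g) v y u p q) has_real_derivative (pX f * g + f * pX g) x y u p q) (at x)"
    using DERIV_mult'[OF pe_D(1)[OF f] pe_D(1)[OF g]] by simp
  have d2: "\<And>x y u p q. ((\<lambda>v. (f * g) x v u p q) has_real_derivative (pY f * g + f * pY g) x y u p q) (at y)"
    using DERIV_mult'[OF pe_D(2)[OF f] pe_D(2)[OF g]] by simp
  have d3: "\<And>x y u p q. ((\<lambda>v. (f * g) x y v p q) has_real_derivative (pU f * g + f * pU g) x y u p q) (at u)"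
    using DERIV_mult'[OF pe_D(3)[OF f] pe_D(3)[OF g]] by simp
  have d4: "\<And>x y u p q. ((\<lambda>v. (f * g) x y u v q) has_real_derivative (pP f * g + f * pP g) x y u p q) (at p)"
    using DERIV_mult'[OF pe_D(4)[OF f] pe_D(4)[OF g]] by simp
  have d5: "\<And>x y u p q. ((\<lambda>v. (f * g) x y u p v) has_real_derivative (pQ f * g + f * pQ g) x y u p q) (at q)"
    using DERIV_mult'[OF pe_D(5)[OF f] pe_D(5)[OF g]] by simp
  from D_pe[of "f * g" "pX f * g + f * pX g" "pY f * g + f * pY g" "pU f * g + f * pU g" "pP f * g + f * pP g" "pQ f * g + f * pQ g", OF d1 d2 d3 d4 d5] show ?thesis by simp
qed

lemma pe_const: "partials_exist (cst c) \<and> pX (cst c) = 0 \<and> pY (cst c) = 0 \<and> pU (cst c) = 0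
   \<and> pP (cst c) = 0 \<and> pQ (cst c) = 0"
  using D_pe[of "cst c" 0 0 0 0 0] by simp

lemma cst_simps: "cst 0 = 0" "cst 1 = 1" "cst (numeral n) = numeral n"
  by (auto simp: cst_def fun_eq_iff)

lemma pe_X: "partials_exist cX \<and> pX cX = 1 \<and> pY cX = 0 \<and> pU cX = 0 \<and> pP cX = 0 \<and> pQ cX = 0"
  using D_pe[of cX 1 0 0 0 0] by simp
lemma pe_Y: "partials_exist cY \<and> pX cY = 0 \<and> pY cY = 1 \<and> pU cY = 0 \<and> pP cY = 0 \<and> pQ cY = 0"
  using D_pe[of cY 0 1 0 0 0] by simp
lemma pe_U: "partials_exist cU \<and> pX cU = 0 \<and> pY cU = 0 \<and> pU cU = 1 \<and> pP cU = 0 \<and> pQ cU = 0"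
  using D_pe[of cU 0 0 1 0 0] by simp
lemma pe_P: "partials_exist cP \<and> pX cP = 0 \<and> pY cP = 0 \<and> pU cP = 0 \<and> pP cP = 1 \<and> pQ cP = 0"
  using D_pe[of cP 0 0 0 1 0] by simp
lemma pe_Q: "partials_exist cQ \<and> pX cQ = 0 \<and> pY cQ = 0 \<and> pU cQ = 0 \<and> pP cQ = 0 \<and> pQ cQ = 1"
  using D_pe[of cQ 0 0 0 0 1] by simp

section \<open>Smoothness closure\<close>

lemmas CkS = Ck.simps(2)
declare Ck.simps(2)[simp del]

lemma Ck_mono: "Ck (Suc k) f \<Longrightarrow> Ck k f"
proof (induction k arbitrary: f)
  case 0 then show ?case by (simp add: CkS)
next
  case (Suc k)
  then show ?case unfolding CkS[of "Suc k"] CkS[of k] by blast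
qed

lemma Ck_add: "Ck k f \<Longrightarrow> Ck k g \<Longrightarrow> Ck k (f + g)"
proof (induction k arbitrary: f g)
  case 0 then show ?case unfolding Ck.simps(1) by (rule cont5_add)
next
  case (Suc k) then show ?case unfolding CkS using pe_add cont5_add by metis
qed
lemma Ck_diff: "Ck k f \<Longrightarrow> Ck k g \<Longrightarrow> Ck k (f - g)"
proof (induction k arbitrary: f g)
  case 0 then show ?case unfolding Ck.simps(1) by (rule cont5_diff)
next
  case (Suc k) then show ?case unfolding CkS using pe_diff cont5_diff by metis
qed
lemma Ck_minus: "Ck k f \<Longrightarrow> Ck k (- f)"
proof (induction k arbitrary: f)
  case 0 then show ?case unfolding Ck.simps(1) by (rule cont5_minus)
next
  case (Suc k) then show ?case unfolding CkS using pe_minus cont5_minus by metis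
qed
lemma Ck_mult: "Ck k f \<Longrightarrow> Ck k g \<Longrightarrow> Ck k (f * g)"
proof (induction k arbitrary: f g)
  case 0 then show ?case unfolding Ck.simps(1) by (rule cont5_mult)
next
  case (Suc k)
  have m: "Ck k f" "Ck k g" using Suc.prems Ck_mono by blast+
  have f: "cont5 f" "partials_exist f" "Ck k (pX f)" "Ck k (pY f)" "Ck k (pU f)" "Ck k (pP f)" "Ck k (pQ f)"
    using Suc.prems(1) unfolding CkS by auto
  have g: "cont5 g" "partials_exist g" "Ck k (pX g)" "Ck k (pY g)" "Ck k (pU g)" "Ck k (pP g)" "Ck k (pQ g)"
    using Suc.prems(2) unfolding CkS by auto
  note pm = pe_mult[OF f(2) g(2)]
  show ?case unfolding CkS
    using pm f g m by (simp add: cont5_mult Ck_add Suc.IH)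
qed

lemma Ck_cst: "Ck k (cst c)"
proof (induction k arbitrary: c)
  case 0 then show ?case unfolding Ck.simps(1) by (rule cont5_coord)
next
  case (Suc k)
  have "Ck k 0" using Suc.IH[of 0] unfolding cst_simps .
  then show ?case unfolding CkS using pe_const[of c] cont5_coord(6)[of c] by metis
qed

lemma Ck_consts: "Ck k 0" "Ck k 1" "Ck k (numeral n)"
  using Ck_cst[of k 0] Ck_cst[of k 1] Ck_cst[of k "numeral n"] unfolding cst_simps .

lemma Ck_coord: "Ck k cX" "Ck k cY" "Ck k cU" "Ck k cP" "Ck k cQ"
  by (cases k; simp only: Ck.simps(1) CkS cont5_coord pe_X pe_Y pe_U pe_P pe_Q Ck_consts simp_thms)+

lemma smooth_Ck: "smooth5 f \<Longrightarrow> Ck k f" by (simp add: smooth5_def)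

lemma smooth_closed[simp]:
  "smooth5 f \<Longrightarrow> smooth5 g \<Longrightarrow> smooth5 (f + g)"
  "smooth5 f \<Longrightarrow> smooth5 g \<Longrightarrow> smooth5 (f - g)"
  "smooth5 f \<Longrightarrow> smooth5 g \<Longrightarrow> smooth5 (f * g)"
  "smooth5 f \<Longrightarrow> smooth5 (- f)"
  by (simp_all add: smooth5_def Ck_add Ck_diff Ck_mult Ck_minus)

lemma smooth_basic[simp]: "smooth5 cX" "smooth5 cY" "smooth5 cU" "smooth5 cP" "smooth5 cQ"
  "smooth5 (cst c)" "smooth5 0" "smooth5 1" "smooth5 (numeral n)"
  by (simp_all add: smooth5_def Ck_coord Ck_cst Ck_consts)

lemma smooth_partials[simp]:
  "smooth5 f \<Longrightarrow> smooth5 (pX f)" "smooth5 f \<Longrightarrow> smooth5 (pY f)" "smooth5 f \<Longrightarrow> smooth5 (pU f)"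
  "smooth5 f \<Longrightarrow> smooth5 (pP f)" "smooth5 f \<Longrightarrow> smooth5 (pQ f)"
  unfolding smooth5_def by (metis CkS)+

lemma smooth_pe: "smooth5 f \<Longrightarrow> partials_exist f"
  unfolding smooth5_def by (metis CkS)
lemma smooth_cont: "smooth5 f \<Longrightarrow> cont5 f"
  unfolding smooth5_def by (metis Ck.simps(1))

lemma smooth_D:
  assumes "smooth5 f"
  shows "((\<lambda>v. f v y u p q) has_real_derivative pX f x y u p q) (at x)"
    "((\<lambda>v. f x v u p q) has_real_derivative pY f x y u p q) (at y)"
    "((\<lambda>v. f x y v p q) has_real_derivative pU f x y u p q) (at u)"
    "((\<lambda>v. f x y u v q) has_real_derivative pP f x y u p q) (at p)"
    "((\<lambda>v. f x y u p v) has_real_derivative pQ f x y u p q) (at q)"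
  by (rule pe_D[OF smooth_pe[OF assms]])+

lemma pd_rules[simp]:
  assumes "smooth5 f" "smooth5 g"
  shows "pX (f + g) = pX f + pX g" "pY (f + g) = pY f + pY g" "pU (f + g) = pU f + pU g"
    "pP (f + g) = pP f + pP g" "pQ (f + g) = pQ f + pQ g"
    "pX (f - g) = pX f - pX g" "pY (f - g) = pY f - pY g" "pU (f - g) = pU f - pU g"
    "pP (f - g) = pP f - pP g" "pQ (f - g) = pQ f - pQ g"
    "pX (f * g) = pX f * g + f * pX g" "pY (f * g) = pY f * g + f * pY g"
    "pU (f * g) = pU f * g + f * pU g"
    "pP (f * g) = pP f * g + f * pP g" "pQ (f * g) = pQ f * g + f * pQ g"
  using pe_add[OF smooth_pe[OF assms(1)] smooth_pe[OF assms(2)]]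
    pe_diff[OF smooth_pe[OF assms(1)] smooth_pe[OF assms(2)]]
    pe_mult[OF smooth_pe[OF assms(1)] smooth_pe[OF assms(2)]] by auto

lemma pd_minus[simp]:
  assumes "smooth5 f"
  shows "pX (- f) = - pX f" "pY (- f) = - pY f" "pU (- f) = - pU f" "pP (- f) = - pP f" "pQ (- f) = - pQ f"
  using pe_minus[OF smooth_pe[OF assms]] by auto

lemma pd_basic[simp]:
  "pX cX = 1" "pY cX = 0" "pU cX = 0" "pP cX = 0" "pQ cX = 0"
  "pX cY = 0" "pY cY = 1" "pU cY = 0" "pP cY = 0" "pQ cY = 0"
  "pX cU = 0" "pY cU = 0" "pU cU = 1" "pP cU = 0" "pQ cU = 0"
  "pX cP = 0" "pY cP = 0" "pU cP = 0" "pP cP = 1" "pQ cP = 0"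
  "pX cQ = 0" "pY cQ = 0" "pU cQ = 0" "pP cQ = 0" "pQ cQ = 1"
  "pX (cst c) = 0" "pY (cst c) = 0" "pU (cst c) = 0" "pP (cst c) = 0" "pQ (cst c) = 0"
  "pX 0 = 0" "pY 0 = 0" "pU 0 = 0" "pP 0 = 0" "pQ 0 = 0"
  "pX 1 = 0" "pY 1 = 0" "pU 1 = 0" "pP 1 = 0" "pQ 1 = 0"
  "pX (numeral n) = 0" "pY (numeral n) = 0" "pU (numeral n) = 0" "pP (numeral n) = 0" "pQ (numeral n) = 0"
  using pe_X pe_Y pe_U pe_P pe_Q pe_const[of c] pe_const[of 0] pe_const[of 1] pe_const[of "numeral n"]
  by (simp_all add: cst_simps)

lemma mvt_pt:
  fixes f :: "real \<Rightarrow> real"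
  assumes "a < b" "\<And>x. (f has_real_derivative f' x) (at x)"
  obtains z where "a < z" "z < b" "f b - f a = (b - a) * f' z"
  using MVT2[OF assms(1), of f f'] assms(2) by blast

lemma tri_contra:
  fixes A B C :: real
  assumes "\<bar>A - B\<bar> < \<bar>B - C\<bar> / 2" "\<bar>A - C\<bar> < \<bar>B - C\<bar> / 2"
  shows False
proof -
  have "\<bar>B - C\<bar> \<le> \<bar>B - A\<bar> + \<bar>A - C\<bar>" using abs_triangle_ineq[of "B - A" "A - C"] by simp
  also have "\<dots> = \<bar>A - B\<bar> + \<bar>A - C\<bar>" by (simp add: abs_minus_commute)
  also have "\<dots> < \<bar>B - C\<bar> / 2 + \<bar>B - C\<bar> / 2" using assms by (rule add_strict_mono)
  finally show False by simp
qed

lemma clairaut2: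
  fixes F Fa Fb Fab Fba :: "real \<Rightarrow> real \<Rightarrow> real"
  assumes d1: "\<And>s t. ((\<lambda>a. F a t) has_real_derivative Fa s t) (at s)"
    and d2: "\<And>s t. ((\<lambda>b. F s b) has_real_derivative Fb s t) (at t)"
    and d12: "\<And>s t. ((\<lambda>b. Fa s b) has_real_derivative Fab s t) (at t)"
    and d21: "\<And>s t. ((\<lambda>a. Fb a t) has_real_derivative Fba s t) (at s)"
    and c12: "continuous_on UNIV (\<lambda>z. Fab (fst z) (snd z))"
    and c21: "continuous_on UNIV (\<lambda>z. Fba (fst z) (snd z))"
  shows "Fab ss tt = Fba ss tt"
proof (rule ccontr)
  assume ne: "Fab ss tt \<noteq> Fba ss tt"
  define e where "e = \<bar>Fab ss tt - Fba ss tt\<bar> / 2"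
  have e: "e > 0" using ne by (simp add: e_def)
  have "continuous (at (ss,tt)) (\<lambda>z. Fab (fst z) (snd z))"
    using c12 by (simp add: continuous_on_eq_continuous_at)
  then obtain k1 where k1: "k1 > 0" "\<And>z. dist z (ss,tt) < k1 \<Longrightarrow> dist (Fab (fst z) (snd z)) (Fab ss tt) < e"
    using e unfolding continuous_at_eps_delta by fastforce
  have "continuous (at (ss,tt)) (\<lambda>z. Fba (fst z) (snd z))"
    using c21 by (simp add: continuous_on_eq_continuous_at)
  then obtain k2 where k2: "k2 > 0" "\<And>z. dist z (ss,tt) < k2 \<Longrightarrow> dist (Fba (fst z) (snd z)) (Fba ss tt) < e"
    using e unfolding continuous_at_eps_delta by fastforce
  define h where "h = min k1 k2 / 4"
  have h: "h > 0" using k1 k2 by (simp add: h_def)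
  have s2: "sqrt 2 < 4" by (simp add: real_sqrt_less_iff[of 2 16, simplified] del: real_sqrt_less_iff)
  have near: "dist (a, b) (ss, tt) < k" if "ss < a" "a < ss + h" "tt < b" "b < tt + h" "k \<ge> min k1 k2" for a b k
  proof -
    have "4 * h \<le> k" using that(5) by (simp add: h_def)
    have sq: "h * sqrt 2 < 4 * h" using s2 h by simp
    have p2: "sqrt 2 > 0" by simp
    have A: "\<bar>a - ss\<bar> * sqrt 2 < h * sqrt 2" using that p2 by (intro mult_strict_right_mono) auto
    have B: "\<bar>b - tt\<bar> * sqrt 2 < h * sqrt 2" using that p2 by (intro mult_strict_right_mono) auto
    have "\<bar>a - ss\<bar> * sqrt 2 < k" using A sq \<open>4 * h \<le> k\<close> by linarith
    moreover have "\<bar>b - tt\<bar> * sqrt 2 < k" using B sq \<open>4 * h \<le> k\<close> by linarith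
    ultimately have "\<bar>a - ss\<bar> < k / sqrt 2" "\<bar>b - tt\<bar> < k / sqrt 2"
      using p2 by (simp_all add: pos_less_divide_eq)
    then show ?thesis by (simp add: dist_Pair_Pair dist_real_def real_sqrt_sum_squares_less)
  qed
  define D where "D = F (ss+h) (tt+h) - F (ss+h) tt - F ss (tt+h) + F ss tt"
  obtain a1 where a1: "ss < a1" "a1 < ss + h"
    "(F (ss+h) (tt+h) - F (ss+h) tt) - (F ss (tt+h) - F ss tt) = ((ss+h) - ss) * (Fa a1 (tt+h) - Fa a1 tt)"
    by (rule mvt_pt[of ss "ss+h" "\<lambda>a. F a (tt+h) - F a tt" "\<lambda>a. Fa a (tt+h) - Fa a tt"])
      (use h in \<open>auto intro!: DERIV_diff d1\<close>)
  obtain b1 where b1: "tt < b1" "b1 < tt + h" "Fa a1 (tt+h) - Fa a1 tt = ((tt+h) - tt) * Fab a1 b1"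
    by (rule mvt_pt[of tt "tt+h" "\<lambda>b. Fa a1 b" "\<lambda>b. Fab a1 b"]) (use h d12 in auto)
  obtain b2 where b2: "tt < b2" "b2 < tt + h"
    "(F (ss+h) (tt+h) - F ss (tt+h)) - (F (ss+h) tt - F ss tt) = ((tt+h) - tt) * (Fb (ss+h) b2 - Fb ss b2)"
    by (rule mvt_pt[of tt "tt+h" "\<lambda>b. F (ss+h) b - F ss b" "\<lambda>b. Fb (ss+h) b - Fb ss b"])
      (use h in \<open>auto intro!: DERIV_diff d2\<close>)
  obtain a2 where a2: "ss < a2" "a2 < ss + h" "Fb (ss+h) b2 - Fb ss b2 = ((ss+h) - ss) * Fba a2 b2"
    by (rule mvt_pt[of ss "ss+h" "\<lambda>a. Fb a b2" "\<lambda>a. Fba a b2"]) (use h d21 in auto)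
  have "h * h * Fab a1 b1 = h * h * Fba a2 b2"
    using a1(3) b1(3) b2(3) a2(3) by (simp add: algebra_simps)
  then have eq: "Fab a1 b1 = Fba a2 b2" using h by simp
  have "dist (Fab a1 b1) (Fab ss tt) < e"
    using k1(2)[of "(a1, b1)"] near[of a1 b1 k1] a1 b1 by simp
  moreover have "dist (Fba a2 b2) (Fba ss tt) < e"
    using k2(2)[of "(a2, b2)"] near[of a2 b2 k2] a2 b2 by simp
  ultimately show False using eq tri_contra[of "Fab a1 b1" "Fab ss tt" "Fba ss tt"] unfolding dist_real_def e_def by simp
qed

lemma cont5_slice:
  assumes "cont5 g" "continuous_on UNIV \<phi>"
  shows "continuous_on UNIV (\<lambda>z. unc g (\<phi> z))"
  using continuous_on_compose2[of UNIV "unc g" UNIV \<phi>] assms by (auto simp: cont5_unc)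

lemma clairaut_XY:
  assumes f: "smooth5 f"
  shows "pY (pX f) = pX (pY f)"
proof (intro ext)
  fix x y u p q :: real
  have sa: "smooth5 (pX f)" and sb: "smooth5 (pY f)" using f by simp_all
  have tc: "continuous_on UNIV (\<lambda>z::real\<times>real. (fst z, snd z, u, p, q))" by (intro continuous_intros)
  have c1: "continuous_on UNIV (\<lambda>z. pY (pX f) (fst z) (snd z) u p q)"
    using cont5_slice[OF smooth_cont[of "pY (pX f)"] tc] f
    by (simp add: unc_def case_prod_beta)
  have c2: "continuous_on UNIV (\<lambda>z. pX (pY f) (fst z) (snd z) u p q)"
    using cont5_slice[OF smooth_cont[of "pX (pY f)"] tc] f
    by (simp add: unc_def case_prod_beta)
  show "pY (pX f) x y u p q = pX (pY f) x y u p q"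
    using clairaut2[where F="\<lambda>s t. f s t u p q" and Fa="\<lambda>s t. pX f s t u p q"
      and Fb="\<lambda>s t. pY f s t u p q" and Fab="\<lambda>s t. pY (pX f) s t u p q"
      and Fba="\<lambda>s t. pX (pY f) s t u p q" and ss=x and tt=y]
      smooth_D[OF f] smooth_D[OF sa] smooth_D[OF sb] c1 c2 by simp
qed

lemma clairaut_XU:
  assumes f: "smooth5 f"
  shows "pU (pX f) = pX (pU f)"
proof (intro ext)
  fix x y u p q :: real
  have sa: "smooth5 (pX f)" and sb: "smooth5 (pU f)" using f by simp_all
  have tc: "continuous_on UNIV (\<lambda>z::real\<times>real. (fst z, y, snd z, p, q))" by (intro continuous_intros)
  have c1: "continuous_on UNIV (\<lambda>z. pU (pX f) (fst z) y (snd z) p q)"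
    using cont5_slice[OF smooth_cont[of "pU (pX f)"] tc] f
    by (simp add: unc_def case_prod_beta)
  have c2: "continuous_on UNIV (\<lambda>z. pX (pU f) (fst z) y (snd z) p q)"
    using cont5_slice[OF smooth_cont[of "pX (pU f)"] tc] f
    by (simp add: unc_def case_prod_beta)
  show "pU (pX f) x y u p q = pX (pU f) x y u p q"
    using clairaut2[where F="\<lambda>s t. f s y t p q" and Fa="\<lambda>s t. pX f s y t p q"
      and Fb="\<lambda>s t. pU f s y t p q" and Fab="\<lambda>s t. pU (pX f) s y t p q"
      and Fba="\<lambda>s t. pX (pU f) s y t p q" and ss=x and tt=u]
      smooth_D[OF f] smooth_D[OF sa] smooth_D[OF sb] c1 c2 by simp
qed

lemma clairaut_XP:
  assumes f: "smooth5 f"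
  shows "pP (pX f) = pX (pP f)"
proof (intro ext)
  fix x y u p q :: real
  have sa: "smooth5 (pX f)" and sb: "smooth5 (pP f)" using f by simp_all
  have tc: "continuous_on UNIV (\<lambda>z::real\<times>real. (fst z, y, u, snd z, q))" by (intro continuous_intros)
  have c1: "continuous_on UNIV (\<lambda>z. pP (pX f) (fst z) y u (snd z) q)"
    using cont5_slice[OF smooth_cont[of "pP (pX f)"] tc] f
    by (simp add: unc_def case_prod_beta)
  have c2: "continuous_on UNIV (\<lambda>z. pX (pP f) (fst z) y u (snd z) q)"
    using cont5_slice[OF smooth_cont[of "pX (pP f)"] tc] f
    by (simp add: unc_def case_prod_beta)
  show "pP (pX f) x y u p q = pX (pP f) x y u p q"
    using clairaut2[where F="\<lambda>s t. f s y u t q" and Fa="\<lambda>s t. pX f s y u t q"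
      and Fb="\<lambda>s t. pP f s y u t q" and Fab="\<lambda>s t. pP (pX f) s y u t q"
      and Fba="\<lambda>s t. pX (pP f) s y u t q" and ss=x and tt=p]
      smooth_D[OF f] smooth_D[OF sa] smooth_D[OF sb] c1 c2 by simp
qed

lemma clairaut_XQ:
  assumes f: "smooth5 f"
  shows "pQ (pX f) = pX (pQ f)"
proof (intro ext)
  fix x y u p q :: real
  have sa: "smooth5 (pX f)" and sb: "smooth5 (pQ f)" using f by simp_all
  have tc: "continuous_on UNIV (\<lambda>z::real\<times>real. (fst z, y, u, p, snd z))" by (intro continuous_intros)
  have c1: "continuous_on UNIV (\<lambda>z. pQ (pX f) (fst z) y u p (snd z))"
    using cont5_slice[OF smooth_cont[of "pQ (pX f)"] tc] f
    by (simp add: unc_def case_prod_beta)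
  have c2: "continuous_on UNIV (\<lambda>z. pX (pQ f) (fst z) y u p (snd z))"
    using cont5_slice[OF smooth_cont[of "pX (pQ f)"] tc] f
    by (simp add: unc_def case_prod_beta)
  show "pQ (pX f) x y u p q = pX (pQ f) x y u p q"
    using clairaut2[where F="\<lambda>s t. f s y u p t" and Fa="\<lambda>s t. pX f s y u p t"
      and Fb="\<lambda>s t. pQ f s y u p t" and Fab="\<lambda>s t. pQ (pX f) s y u p t"
      and Fba="\<lambda>s t. pX (pQ f) s y u p t" and ss=x and tt=q]
      smooth_D[OF f] smooth_D[OF sa] smooth_D[OF sb] c1 c2 by simp
qed

lemma clairaut_YU:
  assumes f: "smooth5 f"
  shows "pU (pY f) = pY (pU f)"
proof (intro ext)
  fix x y u p q :: real
  have sa: "smooth5 (pY f)" and sb: "smooth5 (pU f)" using f by simp_all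
  have tc: "continuous_on UNIV (\<lambda>z::real\<times>real. (x, fst z, snd z, p, q))" by (intro continuous_intros)
  have c1: "continuous_on UNIV (\<lambda>z. pU (pY f) x (fst z) (snd z) p q)"
    using cont5_slice[OF smooth_cont[of "pU (pY f)"] tc] f
    by (simp add: unc_def case_prod_beta)
  have c2: "continuous_on UNIV (\<lambda>z. pY (pU f) x (fst z) (snd z) p q)"
    using cont5_slice[OF smooth_cont[of "pY (pU f)"] tc] f
    by (simp add: unc_def case_prod_beta)
  show "pU (pY f) x y u p q = pY (pU f) x y u p q"
    using clairaut2[where F="\<lambda>s t. f x s t p q" and Fa="\<lambda>s t. pY f x s t p q"
      and Fb="\<lambda>s t. pU f x s t p q" and Fab="\<lambda>s t. pU (pY f) x s t p q"
      and Fba="\<lambda>s t. pY (pU f) x s t p q" and ss=y and tt=u]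
      smooth_D[OF f] smooth_D[OF sa] smooth_D[OF sb] c1 c2 by simp
qed

lemma clairaut_YP:
  assumes f: "smooth5 f"
  shows "pP (pY f) = pY (pP f)"
proof (intro ext)
  fix x y u p q :: real
  have sa: "smooth5 (pY f)" and sb: "smooth5 (pP f)" using f by simp_all
  have tc: "continuous_on UNIV (\<lambda>z::real\<times>real. (x, fst z, u, snd z, q))" by (intro continuous_intros)
  have c1: "continuous_on UNIV (\<lambda>z. pP (pY f) x (fst z) u (snd z) q)"
    using cont5_slice[OF smooth_cont[of "pP (pY f)"] tc] f
    by (simp add: unc_def case_prod_beta)
  have c2: "continuous_on UNIV (\<lambda>z. pY (pP f) x (fst z) u (snd z) q)"
    using cont5_slice[OF smooth_cont[of "pY (pP f)"] tc] f
    by (simp add: unc_def case_prod_beta)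
  show "pP (pY f) x y u p q = pY (pP f) x y u p q"
    using clairaut2[where F="\<lambda>s t. f x s u t q" and Fa="\<lambda>s t. pY f x s u t q"
      and Fb="\<lambda>s t. pP f x s u t q" and Fab="\<lambda>s t. pP (pY f) x s u t q"
      and Fba="\<lambda>s t. pY (pP f) x s u t q" and ss=y and tt=p]
      smooth_D[OF f] smooth_D[OF sa] smooth_D[OF sb] c1 c2 by simp
qed

lemma clairaut_YQ:
  assumes f: "smooth5 f"
  shows "pQ (pY f) = pY (pQ f)"
proof (intro ext)
  fix x y u p q :: real
  have sa: "smooth5 (pY f)" and sb: "smooth5 (pQ f)" using f by simp_all
  have tc: "continuous_on UNIV (\<lambda>z::real\<times>real. (x, fst z, u, p, snd z))" by (intro continuous_intros)
  have c1: "continuous_on UNIV (\<lambda>z. pQ (pY f) x (fst z) u p (snd z))"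
    using cont5_slice[OF smooth_cont[of "pQ (pY f)"] tc] f
    by (simp add: unc_def case_prod_beta)
  have c2: "continuous_on UNIV (\<lambda>z. pY (pQ f) x (fst z) u p (snd z))"
    using cont5_slice[OF smooth_cont[of "pY (pQ f)"] tc] f
    by (simp add: unc_def case_prod_beta)
  show "pQ (pY f) x y u p q = pY (pQ f) x y u p q"
    using clairaut2[where F="\<lambda>s t. f x s u p t" and Fa="\<lambda>s t. pY f x s u p t"
      and Fb="\<lambda>s t. pQ f x s u p t" and Fab="\<lambda>s t. pQ (pY f) x s u p t"
      and Fba="\<lambda>s t. pY (pQ f) x s u p t" and ss=y and tt=q]
      smooth_D[OF f] smooth_D[OF sa] smooth_D[OF sb] c1 c2 by simp
qed

lemma clairaut_UP:
  assumes f: "smooth5 f"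
  shows "pP (pU f) = pU (pP f)"
proof (intro ext)
  fix x y u p q :: real
  have sa: "smooth5 (pU f)" and sb: "smooth5 (pP f)" using f by simp_all
  have tc: "continuous_on UNIV (\<lambda>z::real\<times>real. (x, y, fst z, snd z, q))" by (intro continuous_intros)
  have c1: "continuous_on UNIV (\<lambda>z. pP (pU f) x y (fst z) (snd z) q)"
    using cont5_slice[OF smooth_cont[of "pP (pU f)"] tc] f
    by (simp add: unc_def case_prod_beta)
  have c2: "continuous_on UNIV (\<lambda>z. pU (pP f) x y (fst z) (snd z) q)"
    using cont5_slice[OF smooth_cont[of "pU (pP f)"] tc] f
    by (simp add: unc_def case_prod_beta)
  show "pP (pU f) x y u p q = pU (pP f) x y u p q"
    using clairaut2[where F="\<lambda>s t. f x y s t q" and Fa="\<lambda>s t. pU f x y s t q"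
      and Fb="\<lambda>s t. pP f x y s t q" and Fab="\<lambda>s t. pP (pU f) x y s t q"
      and Fba="\<lambda>s t. pU (pP f) x y s t q" and ss=u and tt=p]
      smooth_D[OF f] smooth_D[OF sa] smooth_D[OF sb] c1 c2 by simp
qed

lemma clairaut_UQ:
  assumes f: "smooth5 f"
  shows "pQ (pU f) = pU (pQ f)"
proof (intro ext)
  fix x y u p q :: real
  have sa: "smooth5 (pU f)" and sb: "smooth5 (pQ f)" using f by simp_all
  have tc: "continuous_on UNIV (\<lambda>z::real\<times>real. (x, y, fst z, p, snd z))" by (intro continuous_intros)
  have c1: "continuous_on UNIV (\<lambda>z. pQ (pU f) x y (fst z) p (snd z))"
    using cont5_slice[OF smooth_cont[of "pQ (pU f)"] tc] f
    by (simp add: unc_def case_prod_beta)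
  have c2: "continuous_on UNIV (\<lambda>z. pU (pQ f) x y (fst z) p (snd z))"
    using cont5_slice[OF smooth_cont[of "pU (pQ f)"] tc] f
    by (simp add: unc_def case_prod_beta)
  show "pQ (pU f) x y u p q = pU (pQ f) x y u p q"
    using clairaut2[where F="\<lambda>s t. f x y s p t" and Fa="\<lambda>s t. pU f x y s p t"
      and Fb="\<lambda>s t. pQ f x y s p t" and Fab="\<lambda>s t. pQ (pU f) x y s p t"
      and Fba="\<lambda>s t. pU (pQ f) x y s p t" and ss=u and tt=q]
      smooth_D[OF f] smooth_D[OF sa] smooth_D[OF sb] c1 c2 by simp
qed

lemma clairaut_PQ:
  assumes f: "smooth5 f"
  shows "pQ (pP f) = pP (pQ f)"
proof (intro ext)
  fix x y u p q :: real
  have sa: "smooth5 (pP f)" and sb: "smooth5 (pQ f)" using f by simp_all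
  have tc: "continuous_on UNIV (\<lambda>z::real\<times>real. (x, y, u, fst z, snd z))" by (intro continuous_intros)
  have c1: "continuous_on UNIV (\<lambda>z. pQ (pP f) x y u (fst z) (snd z))"
    using cont5_slice[OF smooth_cont[of "pQ (pP f)"] tc] f
    by (simp add: unc_def case_prod_beta)
  have c2: "continuous_on UNIV (\<lambda>z. pP (pQ f) x y u (fst z) (snd z))"
    using cont5_slice[OF smooth_cont[of "pP (pQ f)"] tc] f
    by (simp add: unc_def case_prod_beta)
  show "pQ (pP f) x y u p q = pP (pQ f) x y u p q"
    using clairaut2[where F="\<lambda>s t. f x y u s t" and Fa="\<lambda>s t. pP f x y u s t"
      and Fb="\<lambda>s t. pQ f x y u s t" and Fab="\<lambda>s t. pQ (pP f) x y u s t"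
      and Fba="\<lambda>s t. pP (pQ f) x y u s t" and ss=p and tt=q]
      smooth_D[OF f] smooth_D[OF sa] smooth_D[OF sb] c1 c2 by simp
qed

lemmas clair = clairaut_XY clairaut_XU clairaut_XP clairaut_XQ clairaut_YU clairaut_YP clairaut_YQ
  clairaut_UP clairaut_UQ clairaut_PQ
declare clair[simp]

abbreviation "Pf \<equiv> 1 + cP * cP"
abbreviation "Qf \<equiv> 1 + cQ * cQ"
abbreviation "Mf \<equiv> cP * cQ"

definition "opXg g = pX g + cP * pU g"
definition "opYg g = pY g + cQ * pU g"
definition "opA g = pX (pP g) + cP * pU (pP g)"
definition "opB g = pX (pQ g) + cP * pU (pQ g)"
definition "opC g = pY (pP g) + cQ * pU (pP g)"
definition "opD g = pY (pQ g) + cQ * pU (pQ g)"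
definition "cr g = cQ * opYg g + Qf * opA g - Mf * opC g"
definition "ct g = cP * opXg g - Mf * opB g + Pf * opD g"
definition "cs g = - cQ * opXg g - cP * opYg g + Qf * opB g - Mf * opD g - Mf * opA g + Pf * opC g"
definition "Eq1 g = Pf * cr g - Qf * ct g"
definition "Eq2 g = Pf * cs g + 2 * Mf * ct g"
definition "E0 g = Qf * (pX (pX g) + 2 * cP * pX (pU g) + cP * cP * pU (pU g))
   - 2 * Mf * (pX (pY g) + cQ * pX (pU g) + cP * pY (pU g) + Mf * pU (pU g))
   + Pf * (pY (pY g) + 2 * cQ * pY (pU g) + cQ * cQ * pU (pU g))"
definition "LL g = Pf * pP (pP g) + 2 * Mf * pP (pQ g) + Qf * pQ (pQ g)"

lemmas opdefs = opXg_def opYg_def opA_def opB_def opC_def opD_def cr_def ct_def cs_def Eq1_def Eq2_def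
  E0_def LL_def

lemma ellF_formula:
  assumes g: "smooth5 g"
  shows "ellF g x y u p q r s t a b c d =
    (s\<^sup>2 - r * t) * LL g x y u p q + 2 * (cr g x y u p q * r + cs g x y u p q * s + ct g x y u p q * t)
    + E0 g x y u p q + pP g x y u p q * DxF p q r s t a b c + pQ g x y u p q * DyF p q r s t b c d
    + (r * pP (pP g) x y u p q + 2 * s * pP (pQ g) x y u p q + t * pQ (pQ g) x y u p q + pU g x y u p q)
      * Fms p q r s t"
  using g unfolding ellF_def Dxx_def Dxy_def Dyy_def Dx1_def Dy1_def Fms_def DxF_def DyF_def opdefs
  by (simp add: power2_eq_square) algebra

lemma jets_exist:
  fixes p q r s :: real
  defines "t \<equiv> (2*p*q * s - (1+q\<^sup>2) * r)/(1+p\<^sup>2)"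
  defines "c \<equiv> - DxF p q r s t 0 0 0 / (1+p\<^sup>2)"
  defines "d \<equiv> - DyF p q r s t 0 c 0 / (1+p\<^sup>2)"
  shows "Fms p q r s t = 0 \<and> DxF p q r s t 0 0 c = 0 \<and> DyF p q r s t 0 c d = 0"
proof -
  have P: "1 + p\<^sup>2 \<noteq> 0" by (metis add_pos_nonneg zero_less_one zero_le_power2 less_irrefl)
  have "DxF p q r s t 0 0 c = DxF p q r s t 0 0 0 + (1+p\<^sup>2) * c" by (simp add: DxF_def)
  moreover have "DyF p q r s t 0 c d = DyF p q r s t 0 c 0 + (1+p\<^sup>2) * d" by (simp add: DyF_def)
  moreover have "Fms p q r s t = 0" using P unfolding Fms_def t_def by (simp add: field_simps)
  ultimately show ?thesis using P unfolding c_def d_def by simp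
qed

lemma cs_iff: "contact_symmetry g \<longleftrightarrow> smooth5 g \<and> E0 g = 0 \<and> LL g = 0 \<and> Eq1 g = 0 \<and> Eq2 g = 0"
proof
  assume cs: "contact_symmetry g"
  then have g: "smooth5 g" by (simp add: contact_symmetry_def)
  have main: "(1+p\<^sup>2) * s\<^sup>2 * LL g x y u p q - r * (2*p*q * s - (1+q\<^sup>2) * r) * LL g x y u p q
      + 2 * ((1+p\<^sup>2) * cr g x y u p q * r + (1+p\<^sup>2) * cs g x y u p q * s
         + ct g x y u p q * (2*p*q * s - (1+q\<^sup>2) * r))
      + (1+p\<^sup>2) * E0 g x y u p q = 0" for x y u p q r s
  proof -
    define t where "t = (2*p*q * s - (1+q\<^sup>2) * r)/(1+p\<^sup>2)"
    define c where "c = - DxF p q r s t 0 0 0 / (1+p\<^sup>2)"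
    define d where "d = - DyF p q r s t 0 c 0 / (1+p\<^sup>2)"
    have P: "1 + p\<^sup>2 \<noteq> 0" by (metis add_pos_nonneg zero_less_one zero_le_power2 less_irrefl)
    have Pt: "(1+p\<^sup>2) * t = 2*p*q * s - (1+q\<^sup>2) * r" using P by (simp add: t_def)
    have J: "Fms p q r s t = 0" "DxF p q r s t 0 0 c = 0" "DyF p q r s t 0 c d = 0"
      using jets_exist[of p q r s] unfolding t_def c_def d_def by auto
    have "ellF g x y u p q r s t 0 0 c d = 0" using cs J unfolding contact_symmetry_def by blast
    then have "(s\<^sup>2 - r * t) * LL g x y u p q
      + 2 * (cr g x y u p q * r + cs g x y u p q * s + ct g x y u p q * t)
      + E0 g x y u p q = 0" unfolding ellF_formula[OF g] J by simp
    then have Z: "(1+p\<^sup>2) * ((s\<^sup>2 - r * t) * LL g x y u p q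
      + 2 * (cr g x y u p q * r + cs g x y u p q * s + ct g x y u p q * t)
      + E0 g x y u p q) = 0" by simp
    have "(1+p\<^sup>2) * s\<^sup>2 * LL g x y u p q - r * ((1+p\<^sup>2) * t) * LL g x y u p q
      + 2 * ((1+p\<^sup>2) * cr g x y u p q * r + (1+p\<^sup>2) * cs g x y u p q * s
         + ct g x y u p q * ((1+p\<^sup>2) * t))
      + (1+p\<^sup>2) * E0 g x y u p q = (1+p\<^sup>2) * ((s\<^sup>2 - r * t) * LL g x y u p q
      + 2 * (cr g x y u p q * r + cs g x y u p q * s + ct g x y u p q * t)
      + E0 g x y u p q)" by (simp add: algebra_simps)
    also have "\<dots> = 0" by (rule Z)
    finally show ?thesis unfolding Pt .

  qed
  have Pp: "1 + p\<^sup>2 > 0" for p :: real by (simp add: add_pos_nonneg)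
  have pt: "E0 g x y u p q = 0 \<and> LL g x y u p q = 0 \<and> Eq1 g x y u p q = 0 \<and> Eq2 g x y u p q = 0"
    for x y u p q
  proof -
    have E: "E0 g x y u p q = 0"
      using main[where r=0 and s=0 and x=x and y=y and u=u and p=p and q=q] Pp[of p] by simp
    have a: "(1+q\<^sup>2) * LL g x y u p q + 2 * Eq1 g x y u p q = 0"
      using main[where r=1 and s=0 and x=x and y=y and u=u and p=p and q=q] E unfolding Eq1_def by (simp add: algebra_simps power2_eq_square)
    have b: "(1+q\<^sup>2) * LL g x y u p q - 2 * Eq1 g x y u p q = 0"
      using main[where r="-1" and s=0 and x=x and y=y and u=u and p=p and q=q] E unfolding Eq1_def by (simp add: algebra_simps power2_eq_square)
    have "(1+q\<^sup>2) * LL g x y u p q = 0" using a b by linarith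
    then have L: "LL g x y u p q = 0" using Pp[of q] by simp
    have R1: "Eq1 g x y u p q = 0" using a L by simp
    have R2: "Eq2 g x y u p q = 0"
      using main[where r=0 and s=1 and x=x and y=y and u=u and p=p and q=q] E L unfolding Eq2_def by (simp add: algebra_simps power2_eq_square)
    show ?thesis using E L R1 R2 by simp
  qed
  show "smooth5 g \<and> E0 g = 0 \<and> LL g = 0 \<and> Eq1 g = 0 \<and> Eq2 g = 0"
    using g pt by (auto intro!: ext)
next
  assume h: "smooth5 g \<and> E0 g = 0 \<and> LL g = 0 \<and> Eq1 g = 0 \<and> Eq2 g = 0"
  then have g: "smooth5 g" by simp
  show "contact_symmetry g" unfolding contact_symmetry_def
  proof (intro conjI g allI impI)
    fix x y u p q r s t a b c d
    assume J: "Fms p q r s t = 0 \<and> DxF p q r s t a b c = 0 \<and> DyF p q r s t b c d = 0"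
    have e1: "Eq1 g x y u p q = 0" "Eq2 g x y u p q = 0" "E0 g x y u p q = 0" "LL g x y u p q = 0"
      using h by simp_all
    have Pp: "1 + p\<^sup>2 \<noteq> 0" by (metis add_pos_nonneg zero_less_one zero_le_power2 less_irrefl)
    have "(1 + p\<^sup>2) * (cr g x y u p q * r + cs g x y u p q * s + ct g x y u p q * t)
        = ct g x y u p q * Fms p q r s t + r * Eq1 g x y u p q + s * Eq2 g x y u p q"
      unfolding Eq1_def Eq2_def Fms_def by (simp add: algebra_simps power2_eq_square)
    then have "cr g x y u p q * r + cs g x y u p q * s + ct g x y u p q * t = 0"
      using J e1 Pp by simp
    then show "ellF g x y u p q r s t a b c d = 0"
      unfolding ellF_formula[OF g] using J e1 by simp
  qed
qed

definition "K1 g = pX (pX g)"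

definition "A1 g = (- cP * pX (pX g) - cQ * pX (pY g) + pX (pU g))
   + cP * (- cP * pX (pU g) - cQ * pY (pU g) + pU (pU g))"

lemma A1_cert:
  assumes g: "smooth5 g"
  shows "2 * A1 g = - cP * pU (Eq1 g) - pX (Eq1 g) - cQ * pU (Eq2 g) - pY (Eq2 g) - 3 * cP * E0 g
     + cP * cQ * pQ (E0 g) + Pf * pP (E0 g)"
  unfolding A1_def opdefs using g
  apply (intro ext)
  apply (simp add: algebra_simps)
  done

definition "A2 g = (- cP * pX (pY g) - cQ * pY (pY g) + pY (pU g))
   + cQ * (- cP * pX (pU g) - cQ * pY (pU g) + pU (pU g))"

lemma A2_cert:
  assumes g: "smooth5 g"
  shows "2 * Pf * A2 g = (cQ - cP * cP * cQ) * pU (Eq1 g) - 2 * cP * cQ * pX (Eq1 g) + Pf * pY (Eq1 g)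
     - (cP + cP * cQ * cQ) * pU (Eq2 g) - Qf * pX (Eq2 g) - 3 * cQ * Pf * E0 g
     + Pf * Qf * pQ (E0 g) + Pf * cP * cQ * pP (E0 g)"
  unfolding A2_def opdefs using g
  apply (intro ext)
  apply (simp add: algebra_simps)
  done

abbreviation "Df \<equiv> 1 + cP * cP + cQ * cQ"

definition "N1 g = - cP * pX (Eq1 g) - cQ * pY (Eq1 g) + pU (Eq1 g)"
definition "N2 g = - cP * pX (Eq2 g) - cQ * pY (Eq2 g) + pU (Eq2 g)"
definition "B1 g = pX (pX g) + 2 * cP * pX (pU g) + cP * cP * pU (pU g)"
definition "B2 g = pX (pY g) + cQ * pX (pU g) + cP * pY (pU g) + cP * cQ * pU (pU g)"
definition "B3 g = pY (pY g) + 2 * cQ * pY (pU g) + cQ * cQ * pU (pU g)"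

lemma B1_cert:
  assumes g: "smooth5 g"
  shows "2 * Df * B1 g = Pf * N1 g + cP * cQ * N2 g + Pf * E0 g
    + 2 * (cP + 2 * cP * cQ * cQ + cP * cP * cP) * A1 g - Pf * Df * pP (A1 g) - 2 * cP * cQ * Df * pQ (A1 g)
    - 2 * (cQ + cP * cP * cQ) * A2 g + Pf * Df * pQ (A2 g)"
  unfolding A1_def A2_def B1_def N1_def N2_def opdefs using g
  apply (intro ext)
  apply simp
  apply algebra
  done

lemma B2_cert:
  assumes g: "smooth5 g"
  shows "2 * Df * B2 g = cP * cQ * N1 g + Qf * N2 g + cP * cQ * E0 g
    + 2 * (cQ + cQ * cQ * cQ) * A1 g - Qf * Df * pQ (A1 g)
    + 2 * (cP + cP * cP * cP) * A2 g - Pf * Df * pP (A2 g)"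
  unfolding A1_def A2_def B2_def N1_def N2_def opdefs using g
  apply (intro ext)
  apply simp
  apply algebra
  done

lemma B3_cert:
  assumes g: "smooth5 g"
  shows "2 * Df * Pf * B3 g = (- 1 - cQ * cQ - cP * cP + cP * cP * cQ * cQ) * N1 g
    + (cP * cQ + cP * cQ * cQ * cQ) * N2 g + Qf * Pf * E0 g
    - 2 * Pf * cP * Qf * A1 g + Pf * Qf * Df * pP (A1 g)
    + 2 * Pf * (cQ + cQ * cQ * cQ + 2 * cP * cP * cQ) * A2 g - 2 * cP * cQ * Df * Pf * pP (A2 g)
    - Pf * Qf * Df * pQ (A2 g)"
  unfolding A1_def A2_def B3_def N1_def N2_def opdefs using g
  apply (intro ext)
  apply simp
  apply algebra
  done

lemma C_certs:
  "Df * (pX (pU g) + cP * pU (pU g)) = A1 g + cP * B1 g + cQ * B2 g"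
  "Df * (pY (pU g) + cQ * pU (pU g)) = A2 g + cP * B2 g + cQ * B3 g"
  "Df * (pX (pX g) - cP * cP * pU (pU g)) = - 2 * cP * A1 g + (1 + cQ * cQ - cP * cP) * B1 g - 2 * cP * cQ * B2 g"
  "Df * (pX (pY g) - cP * cQ * pU (pU g)) = - cQ * A1 g - cP * A2 g - cP * cQ * B1 g + B2 g - cP * cQ * B3 g"
  "Df * (pY (pY g) - cQ * cQ * pU (pU g)) = - 2 * cQ * A2 g - 2 * cP * cQ * B2 g + (1 - cQ * cQ + cP * cP) * B3 g"
  unfolding A1_def A2_def B1_def B2_def B3_def
  by (intro ext; simp; algebra)+

lemma fn5_eqD: "F = G \<Longrightarrow> F x y u p q = G x y u p q" by simp

lemma fn5_cancel:
  assumes "c * f = (0::fn5)" "\<And>x y u p q. c x y u p q \<noteq> 0"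
  shows "f = 0"
proof (intro ext)
  fix x y u p q
  have "c x y u p q * f x y u p q = 0" using fn5_eqD[OF assms(1), of x y u p q] by simp
  then show "f x y u p q = 0 x y u p q" using assms(2)[of x y u p q] by simp
qed

lemma pos_PQD: "(1 + p * p :: real) \<noteq> 0" "(1 + q * q :: real) \<noteq> 0" "(1 + p * p + q * q :: real) \<noteq> 0"
  by (metis add_pos_nonneg zero_less_one zero_le_square less_irrefl
      add_nonneg_nonneg)+

lemma pos_more: "(2 + 2 * (p * p) :: real) \<noteq> 0" "(2 + 2 * (p * p) + 2 * (q * q) :: real) \<noteq> 0"
  using zero_le_square[of p] zero_le_square[of q] by linarith+

lemma stage1:
  assumes g: "smooth5 g" and e: "E0 g = 0" "LL g = 0" "Eq1 g = 0" "Eq2 g = 0"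
  shows "pX (pX g) = 0 \<and> pX (pY g) = 0 \<and> pX (pU g) = 0 \<and> pY (pY g) = 0 \<and> pY (pU g) = 0
    \<and> pU (pU g) = 0"
proof -
  have "2 * A1 g = 0" unfolding A1_cert[OF g] e by simp
  then have a1: "A1 g = 0" by (rule fn5_cancel) simp
  have "2 * Pf * A2 g = 0" unfolding A2_cert[OF g] e by simp
  then have a2: "A2 g = 0" by (rule fn5_cancel) (simp only: fun_apply5 coord_apply mult_eq_0_iff; simp add: pos_PQD pos_more)
  have n: "N1 g = 0" "N2 g = 0" unfolding N1_def N2_def e by simp_all
  have "2 * Df * B1 g = 0" unfolding B1_cert[OF g] e n a1 a2 by simp
  then have b1: "B1 g = 0" by (rule fn5_cancel) (simp only: fun_apply5 coord_apply mult_eq_0_iff; simp add: pos_PQD pos_more)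
  have "2 * Df * B2 g = 0" unfolding B2_cert[OF g] e n a1 a2 by simp
  then have b2: "B2 g = 0" by (rule fn5_cancel) (simp only: fun_apply5 coord_apply mult_eq_0_iff; simp add: pos_PQD pos_more)
  have "2 * Df * Pf * B3 g = 0" unfolding B3_cert[OF g] e n a1 a2 by simp
  then have b3: "B3 g = 0" by (rule fn5_cancel) (simp only: fun_apply5 coord_apply mult_eq_0_iff; simp add: pos_PQD pos_more)
  have "Df * (pX (pU g) + cP * pU (pU g)) = 0" using C_certs(1)[of g] unfolding a1 a2 b1 b2 b3 by simp
  then have k1: "pX (pU g) + cP * pU (pU g) = 0" by (rule fn5_cancel) (simp only: fun_apply5 coord_apply mult_eq_0_iff; simp add: pos_PQD pos_more)
  have "Df * (pY (pU g) + cQ * pU (pU g)) = 0" using C_certs(2)[of g] unfolding a1 a2 b1 b2 b3 by simp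
  then have k2: "pY (pU g) + cQ * pU (pU g) = 0" by (rule fn5_cancel) (simp only: fun_apply5 coord_apply mult_eq_0_iff; simp add: pos_PQD pos_more)
  have "Df * (pX (pX g) - cP * cP * pU (pU g)) = 0" using C_certs(3)[of g] unfolding a1 a2 b1 b2 b3 by simp
  then have k3: "pX (pX g) - cP * cP * pU (pU g) = 0" by (rule fn5_cancel) (simp only: fun_apply5 coord_apply mult_eq_0_iff; simp add: pos_PQD pos_more)
  have "Df * (pX (pY g) - cP * cQ * pU (pU g)) = 0" using C_certs(4)[of g] unfolding a1 a2 b1 b2 b3 by simp
  then have k4: "pX (pY g) - cP * cQ * pU (pU g) = 0" by (rule fn5_cancel) (simp only: fun_apply5 coord_apply mult_eq_0_iff; simp add: pos_PQD pos_more)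
  have "Df * (pY (pY g) - cQ * cQ * pU (pU g)) = 0" using C_certs(5)[of g] unfolding a1 a2 b1 b2 b3 by simp
  then have k5: "pY (pY g) - cQ * cQ * pU (pU g) = 0" by (rule fn5_cancel) (simp only: fun_apply5 coord_apply mult_eq_0_iff; simp add: pos_PQD pos_more)
  have kxu: "pX (pU g) = - cP * pU (pU g)" using k1 by (simp add: algebra_simps eq_neg_iff_add_eq_0)
  have kyu: "pY (pU g) = - cQ * pU (pU g)" using k2 by (simp add: algebra_simps eq_neg_iff_add_eq_0)
  have kxx: "pX (pX g) = cP * cP * pU (pU g)" using k3 by simp
  have kxy: "pX (pY g) = cP * cQ * pU (pU g)" using k4 by simp
  have kyy: "pY (pY g) = cQ * cQ * pU (pU g)" using k5 by simp
  have l1: "pU (pU (LL g)) = 0" "pX (pU (LL g)) = 0" "pY (pU (LL g)) = 0" "pX (pX (LL g)) = 0"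
    using e by simp_all
  have d: "pP (pP (pX (pU g))) = pP (pP (- cP * pU (pU g)))"
     "pP (pQ (pX (pU g))) = pP (pQ (- cP * pU (pU g)))"
     "pQ (pQ (pX (pU g))) = pQ (pQ (- cP * pU (pU g)))"
     "pP (pP (pY (pU g))) = pP (pP (- cQ * pU (pU g)))"
     "pP (pQ (pY (pU g))) = pP (pQ (- cQ * pU (pU g)))"
     "pQ (pQ (pY (pU g))) = pQ (pQ (- cQ * pU (pU g)))"
     "pP (pP (pX (pX g))) = pP (pP (cP * cP * pU (pU g)))"
     "pP (pQ (pX (pX g))) = pP (pQ (cP * cP * pU (pU g)))"
     "pQ (pQ (pX (pX g))) = pQ (pQ (cP * cP * pU (pU g)))"
    by (simp_all only: kxu kyu kxx)
  have kp: "pU (pU (pP g)) x y u p q = 0 \<and> pU (pU (pQ g)) x y u p q = 0" for x y u p q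
  proof -
    note dd = d[THEN fn5_eqD[where x=x and y=y and u=u and p=p and q=q]]
    note ll = l1[THEN fn5_eqD[where x=x and y=y and u=u and p=p and q=q]]
    have s1: "(1 + p * p) * pU (pU (pP g)) x y u p q + p * q * pU (pU (pQ g)) x y u p q = 0"
      using dd(1-3) ll(1,2) g unfolding LL_def by simp algebra
    have s2: "p * q * pU (pU (pP g)) x y u p q + (1 + q * q) * pU (pU (pQ g)) x y u p q = 0"
      using dd(4-6) ll(1,3) g unfolding LL_def by simp algebra
    have "(1 + p * p + q * q) * pU (pU (pP g)) x y u p q = 0" using s1 s2 by algebra
    moreover have "(1 + p * p + q * q) * pU (pU (pQ g)) x y u p q = 0" using s1 s2 by algebra
    ultimately show ?thesis using pos_PQD by simp
  qed
  have kz: "pU (pU g) x y u p q = 0" for x y u p q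
  proof -
    note dd = d[THEN fn5_eqD[where x=x and y=y and u=u and p=p and q=q]]
    note ll = l1[THEN fn5_eqD[where x=x and y=y and u=u and p=p and q=q]]
    have "2 * (1 + p * p) * pU (pU g) x y u p q = 0"
      using dd(7-9) ll(1,4) kp[of x y u p q] g unfolding LL_def by simp algebra
    then show ?thesis using pos_more by simp
  qed
  have kz': "pU (pU g) = 0" using kz by (intro ext) simp
  show ?thesis using kxu kyu kxx kxy kyy kz' by simp
qed

definition "nu g = pU g - cP * pX g - cQ * pY g"
definition "T1 g = Df * pP (nu g) - 2 * cP * nu g"
definition "T2 g = Df * pQ (nu g) - 2 * cQ * nu g"

lemma T2_cert:
  assumes g: "smooth5 g"
  shows "2 * T2 g = 4 * cQ * Eq1 g - Df * pQ (Eq1 g) - 4 * cP * Eq2 g + Df * pP (Eq2 g)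
    + cP * cQ * Df * pX (LL g) - (1 + cQ * cQ + 2 * cP * cP + cP * cP * cQ * cQ + cP * cP * cP * cP) * pY (LL g)
    - cQ * Df * pU (LL g)"
  unfolding T2_def nu_def opdefs using g
  apply (intro ext)
  apply simp
  apply algebra
  done

lemma T1_cert:
  assumes g: "smooth5 g"
  shows "2 * Pf * T1 g = 2 * (- cP - 3 * cP * cQ * cQ - cP * cP * cP) * Eq1 g + Pf * Df * pP (Eq1 g)
    + 2 * cP * cQ * Df * pQ (Eq1 g) + 2 * (- cQ - cQ * cQ * cQ + cP * cP * cQ) * Eq2 g + Qf * Df * pQ (Eq2 g)
    - Pf * Qf * Df * pX (LL g) + Pf * cP * cQ * Df * pY (LL g) - Pf * cP * Df * pU (LL g)"
  unfolding T1_def nu_def opdefs using g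
  apply (intro ext)
  apply simp
  apply algebra
  done

lemma const_by_deriv:
  fixes f :: fn5
  assumes "\<And>x y u p q. ((\<lambda>v. f v y u p q) has_real_derivative 0) (at x)"
    "\<And>x y u p q. ((\<lambda>v. f x v u p q) has_real_derivative 0) (at y)"
    "\<And>x y u p q. ((\<lambda>v. f x y v p q) has_real_derivative 0) (at u)"
    "\<And>x y u p q. ((\<lambda>v. f x y u v q) has_real_derivative 0) (at p)"
    "\<And>x y u p q. ((\<lambda>v. f x y u p v) has_real_derivative 0) (at q)"
  shows "f x y u p q = f 0 0 0 0 0"
proof -
  have "f x y u p q = f 0 y u p q" using DERIV_isconst_all[of "\<lambda>v. f v y u p q" x 0] assms(1) by blast
  also have "\<dots> = f 0 0 u p q" using DERIV_isconst_all[of "\<lambda>v. f 0 v u p q" y 0] assms(2) by blast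
  also have "\<dots> = f 0 0 0 p q" using DERIV_isconst_all[of "\<lambda>v. f 0 0 v p q" u 0] assms(3) by blast
  also have "\<dots> = f 0 0 0 0 q" using DERIV_isconst_all[of "\<lambda>v. f 0 0 0 v q" p 0] assms(4) by blast
  also have "\<dots> = f 0 0 0 0 0" using DERIV_isconst_all[of "\<lambda>v. f 0 0 0 0 v" q 0] assms(5) by blast
  finally show ?thesis .
qed

lemma const_smooth:
  assumes "smooth5 f" "pX f = 0" "pY f = 0" "pU f = 0" "pP f = 0" "pQ f = 0"
  shows "f x y u p q = f 0 0 0 0 0"
  using smooth_D[OF assms(1)] assms(2-6) by (intro const_by_deriv) auto

lemma nu_smooth[simp]: "smooth5 g \<Longrightarrow> smooth5 (nu g)" by (simp add: nu_def)

lemma pass1: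
  assumes g: "smooth5 g" and e: "E0 g = 0" "LL g = 0" "Eq1 g = 0" "Eq2 g = 0"
  shows "\<exists>k. nu g = cst k * Df"
proof -
  have s1: "pX (pX g) = 0" "pX (pY g) = 0" "pX (pU g) = 0" "pY (pY g) = 0" "pY (pU g) = 0"
    "pU (pU g) = 0" using stage1[OF g e] by simp_all
  have nx: "pX (nu g) = 0" "pY (nu g) = 0" "pU (nu g) = 0"
    unfolding nu_def using g s1 by simp_all
  have "2 * T2 g = 0" unfolding T2_cert[OF g] e by simp
  then have t2: "T2 g = 0" by (rule fn5_cancel) simp
  have "2 * Pf * T1 g = 0" unfolding T1_cert[OF g] e by simp
  then have t1: "T1 g = 0" by (rule fn5_cancel) (simp only: fun_apply5 coord_apply mult_eq_0_iff; simp add: pos_PQD pos_more)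
  define w where "w = (\<lambda>x y u p q. nu g x y u p q / (1 + p * p + q * q))"
  have dn: "\<And>x y u p q. (1 + p * p + q * q :: real) \<noteq> 0" by (rule pos_PQD)
  have wc: "w x y u p q = w 0 0 0 0 0" for x y u p q
  proof (rule const_by_deriv)
    fix x y u p q :: real
    show "((\<lambda>v. w v y u p q) has_real_derivative 0) (at x)"
    proof -
      have "((\<lambda>v. nu g v y u p q) has_real_derivative pX (nu g) x y u p q) (at x)"
        by (rule smooth_D(1)[OF nu_smooth[OF g]])
      from DERIV_cdivide[OF this, of "1 + p * p + q * q"] show ?thesis using nx unfolding w_def by simp
    qed
    show "((\<lambda>v. w x v u p q) has_real_derivative 0) (at y)"
    proof -
      have "((\<lambda>v. nu g x v u p q) has_real_derivative pY (nu g) x y u p q) (at y)"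
        by (rule smooth_D(2)[OF nu_smooth[OF g]])
      from DERIV_cdivide[OF this, of "1 + p * p + q * q"] show ?thesis using nx unfolding w_def by simp
    qed
    show "((\<lambda>v. w x y v p q) has_real_derivative 0) (at u)"
    proof -
      have "((\<lambda>v. nu g x y v p q) has_real_derivative pU (nu g) x y u p q) (at u)"
        by (rule smooth_D(3)[OF nu_smooth[OF g]])
      from DERIV_cdivide[OF this, of "1 + p * p + q * q"] show ?thesis using nx unfolding w_def by simp
    qed
    have dP: "((\<lambda>v. 1 + v * v + q * q) has_real_derivative (2 * p)) (at p)"
      by (auto intro!: derivative_eq_intros)
    have dQ: "((\<lambda>v. 1 + p * p + v * v) has_real_derivative (2 * q)) (at q)"
      by (auto intro!: derivative_eq_intros)
    have "((\<lambda>v. w x y u v q) has_real_derivative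
        (pP (nu g) x y u p q * (1 + p * p + q * q) - nu g x y u p q * (2 * p)) / ((1 + p * p + q * q) * (1 + p * p + q * q))) (at p)"
      unfolding w_def by (rule DERIV_divide[OF smooth_D(4)[OF nu_smooth[OF g]] dP dn])
    moreover have "pP (nu g) x y u p q * (1 + p * p + q * q) - nu g x y u p q * (2 * p) = 0"
      using fn5_eqD[OF t1, of x y u p q] unfolding T1_def by (simp add: algebra_simps)
    ultimately show "((\<lambda>v. w x y u v q) has_real_derivative 0) (at p)" by simp
    have "((\<lambda>v. w x y u p v) has_real_derivative
        (pQ (nu g) x y u p q * (1 + p * p + q * q) - nu g x y u p q * (2 * q)) / ((1 + p * p + q * q) * (1 + p * p + q * q))) (at q)"
      unfolding w_def by (rule DERIV_divide[OF smooth_D(5)[OF nu_smooth[OF g]] dQ dn])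
    moreover have "pQ (nu g) x y u p q * (1 + p * p + q * q) - nu g x y u p q * (2 * q) = 0"
      using fn5_eqD[OF t2, of x y u p q] unfolding T2_def by (simp add: algebra_simps)
    ultimately show "((\<lambda>v. w x y u p v) has_real_derivative 0) (at q)" by simp
  qed
  have "nu g = cst (w 0 0 0 0 0) * Df"
  proof (intro ext)
    fix x y u p q
    have "nu g x y u p q = w x y u p q * (1 + p * p + q * q)" unfolding w_def using dn by simp
    then show "nu g x y u p q = (cst (w 0 0 0 0 0) * Df) x y u p q" using wc by simp
  qed
  then show ?thesis by blast
qed

lemma pass2_cert:
  assumes g: "smooth5 g" and G: "pU g = cP * pX g + cQ * pY g + cst k * Df"
  shows "4 * Df * Df * Pf * (pX (pP g) + cst k) = 2 * (1 + cQ * cQ + cP * cP - cP * cP * cQ * cQ) * Eq1 g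
      - 2 * cP * cQ * Qf * Eq2 g - cP * Qf * Df * Pf * pX (LL g) - cQ * Qf * Df * Pf * pY (LL g)
      + Qf * Df * Pf * pU (LL g)"
    and "4 * Df * Df * (pY (pQ g) + cst k) = - 2 * Pf * Eq1 g - 2 * cP * cQ * Eq2 g
      - cP * Pf * Df * pX (LL g) - cQ * Pf * Df * pY (LL g) + Pf * Df * pU (LL g)"
    and "2 * Df * Df * (pX (pQ g) + pY (pP g)) = 2 * cP * cQ * Eq1 g + 2 * Qf * Eq2 g
      + cP * cP * cQ * Df * pX (LL g) + cP * cQ * cQ * Df * pY (LL g) - cP * cQ * Df * pU (LL g)"
proof -
  have "pP (pU g) = pP (cP * pX g + cQ * pY g + cst k * Df)" by (simp only: G)
  then have G1: "pU (pP g) = pP (cP * pX g + cQ * pY g + cst k * Df)" using g by simp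
  have "pQ (pU g) = pQ (cP * pX g + cQ * pY g + cst k * Df)" by (simp only: G)
  then have G2: "pU (pQ g) = pQ (cP * pX g + cQ * pY g + cst k * Df)" using g by simp
  have "pP (pP (pU g)) = pP (pP (cP * pX g + cQ * pY g + cst k * Df))" by (simp only: G)
  then have G11: "pU (pP (pP g)) = pP (pP (cP * pX g + cQ * pY g + cst k * Df))" using g by simp
  have "pP (pQ (pU g)) = pP (pQ (cP * pX g + cQ * pY g + cst k * Df))" by (simp only: G)
  then have G12: "pU (pP (pQ g)) = pP (pQ (cP * pX g + cQ * pY g + cst k * Df))" using g by simp
  have "pQ (pQ (pU g)) = pQ (pQ (cP * pX g + cQ * pY g + cst k * Df))" by (simp only: G)
  then have G22: "pU (pQ (pQ g)) = pQ (pQ (cP * pX g + cQ * pY g + cst k * Df))" using g by simp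
  note Gs = G G1 G2 G11 G12 G22
  show "4 * Df * Df * Pf * (pX (pP g) + cst k) = 2 * (1 + cQ * cQ + cP * cP - cP * cP * cQ * cQ) * Eq1 g
      - 2 * cP * cQ * Qf * Eq2 g - cP * Qf * Df * Pf * pX (LL g) - cQ * Qf * Df * Pf * pY (LL g)
      + Qf * Df * Pf * pU (LL g)"
    unfolding opdefs using g
    apply (intro ext)
    apply (simp add: Gs)
    apply algebra
    done
  show "4 * Df * Df * (pY (pQ g) + cst k) = - 2 * Pf * Eq1 g - 2 * cP * cQ * Eq2 g
      - cP * Pf * Df * pX (LL g) - cQ * Pf * Df * pY (LL g) + Pf * Df * pU (LL g)"
    unfolding opdefs using g
    apply (intro ext)
    apply (simp add: Gs)
    apply algebra
    done
  show "2 * Df * Df * (pX (pQ g) + pY (pP g)) = 2 * cP * cQ * Eq1 g + 2 * Qf * Eq2 g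
      + cP * cP * cQ * Df * pX (LL g) + cP * cQ * cQ * Df * pY (LL g) - cP * cQ * Df * pU (LL g)"
    unfolding opdefs using g
    apply (intro ext)
    apply (simp add: Gs)
    apply algebra
    done
qed

definition "phi1 = cY * cP - cX * cQ"
definition "phi2 = cX + cU * cP"
definition "phi3 = cY + cU * cQ"
definition "phi4 = cU - cX * cP - cY * cQ"

lemma phi_smooth[simp]: "smooth5 phi1" "smooth5 phi2" "smooth5 phi3" "smooth5 phi4"
  by (simp_all add: phi1_def phi2_def phi3_def phi4_def)

lemma const_xyu:
  assumes "smooth5 f" "pX f = 0" "pY f = 0" "pU f = 0"
  shows "f x y u p q = f 0 0 0 p q"
proof -
  have "f x y u p q = f 0 y u p q"
    using DERIV_isconst_all[of "\<lambda>v. f v y u p q" x 0] smooth_D(1)[OF assms(1)] assms(2) by simp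
  also have "\<dots> = f 0 0 u p q"
    using DERIV_isconst_all[of "\<lambda>v. f 0 v u p q" y 0] smooth_D(2)[OF assms(1)] assms(3) by simp
  also have "\<dots> = f 0 0 0 p q"
    using DERIV_isconst_all[of "\<lambda>v. f 0 0 v p q" u 0] smooth_D(3)[OF assms(1)] assms(4) by simp
  finally show ?thesis .
qed

lemma classify:
  assumes g: "smooth5 g" and e: "E0 g = 0" "LL g = 0" "Eq1 g = 0" "Eq2 g = 0"
  shows "\<exists>h c1 c2 c3 c4. pq_solution h \<and> g = (\<lambda>x y u p q. h x y u p q + c1 * (y * p - x * q)
     + c2 * (x + u * p) + c3 * (y + u * q) + c4 * (u - x * p - y * q))"
proof -
  have s1: "pX (pX g) = 0" "pX (pY g) = 0" "pX (pU g) = 0" "pY (pY g) = 0" "pY (pU g) = 0"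
    "pU (pU g) = 0" using stage1[OF g e] by simp_all
  obtain k where nk: "nu g = cst k * Df" using pass1[OF g e] by blast
  have G: "pU g = cP * pX g + cQ * pY g + cst k * Df"
    using nk unfolding nu_def by (simp add: algebra_simps)
  note pc = pass2_cert[OF g G]
  have "4 * Df * Df * Pf * (pX (pP g) + cst k) = 0" unfolding pc(1) e by simp
  then have ap: "pX (pP g) + cst k = 0"
    by (rule fn5_cancel) (simp only: fun_apply5 coord_apply mult_eq_0_iff; simp add: pos_PQD pos_more)
  have "4 * Df * Df * (pY (pQ g) + cst k) = 0" unfolding pc(2) e by simp
  then have bq: "pY (pQ g) + cst k = 0"
    by (rule fn5_cancel) (simp only: fun_apply5 coord_apply mult_eq_0_iff; simp add: pos_PQD pos_more)
  have "2 * Df * Df * (pX (pQ g) + pY (pP g)) = 0" unfolding pc(3) e by simp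
  then have aqbp: "pX (pQ g) + pY (pP g) = 0"
    by (rule fn5_cancel) (simp only: fun_apply5 coord_apply mult_eq_0_iff; simp add: pos_PQD pos_more)
  have ap': "pX (pP g) = - cst k" using ap by (simp add: eq_neg_iff_add_eq_0)
  have bq': "pY (pQ g) = - cst k" using bq by (simp add: eq_neg_iff_add_eq_0)
  have bp': "pY (pP g) = - pX (pQ g)" using aqbp by (simp add: eq_neg_iff_add_eq_0 add.commute)
  have aq_d: "pX (pX (pQ g)) = 0" "pY (pX (pQ g)) = 0" "pU (pX (pQ g)) = 0" "pP (pX (pQ g)) = 0"
    "pQ (pX (pQ g)) = 0"
  proof -
    have "pQ (pX (pX g)) = 0" "pQ (pX (pY g)) = 0" "pQ (pX (pU g)) = 0" using s1 by simp_all
    then show "pX (pX (pQ g)) = 0" "pY (pX (pQ g)) = 0" "pU (pX (pQ g)) = 0" using g by simp_all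
    have "pQ (pX (pP g)) = 0" using ap' by simp
    then show "pP (pX (pQ g)) = 0" using g by simp
    have "pP (pY (pQ g)) = 0" using bq' by simp
    moreover have "pQ (pY (pP g)) = - pQ (pX (pQ g))" using bp' g by simp
    ultimately show "pQ (pX (pQ g)) = 0" using g by simp
  qed
  define c1 where "c1 = - pX (pQ g) 0 0 0 0 0"
  have aq: "pX (pQ g) = - cst c1"
  proof (intro ext)
    fix x y u p q
    show "pX (pQ g) x y u p q = (- cst c1) x y u p q"
      using const_smooth[of "pX (pQ g)" x y u p q] g aq_d unfolding c1_def by simp
  qed
  define c2 where "c2 = pX g 0 0 0 0 0"
  define c3 where "c3 = pY g 0 0 0 0 0"
  have al: "pX g = cst c2 - cst k * cP - cst c1 * cQ"
  proof -
    let ?D = "pX g - (cst c2 - cst k * cP - cst c1 * cQ)"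
    have sD: "smooth5 ?D" using g by simp
    have dD: "pX ?D = 0" "pY ?D = 0" "pU ?D = 0" "pP ?D = 0" "pQ ?D = 0"
      using g s1 ap' aq by (simp_all add: algebra_simps)
    have "?D x y u p q = 0" for x y u p q
      using const_smooth[OF sD dD, of x y u p q] unfolding c2_def by simp
    then have "?D = 0" by (intro ext) simp
    then show ?thesis by simp
  qed
  have be: "pY g = cst c3 + cst c1 * cP - cst k * cQ"
  proof -
    let ?D = "pY g - (cst c3 + cst c1 * cP - cst k * cQ)"
    have sD: "smooth5 ?D" using g by simp
    have dD: "pX ?D = 0" "pY ?D = 0" "pU ?D = 0" "pP ?D = 0" "pQ ?D = 0"
      using g s1 bq' bp' aq by (simp_all add: algebra_simps)
    have "?D x y u p q = 0" for x y u p q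
      using const_smooth[OF sD dD, of x y u p q] unfolding c3_def by simp
    then have "?D = 0" by (intro ext) simp
    then show ?thesis by simp
  qed
  define h where "h = g - (cst c1 * phi1 + cst c2 * phi2 + cst c3 * phi3 + cst k * phi4)"
  have sh: "smooth5 h" unfolding h_def using g by simp
  have hx: "pX h = 0" unfolding h_def phi1_def phi2_def phi3_def phi4_def using g al
    by (simp add: algebra_simps)
  have hy: "pY h = 0" unfolding h_def phi1_def phi2_def phi3_def phi4_def using g be
    by (simp add: algebra_simps)
  have hu: "pU h = 0" unfolding h_def phi1_def phi2_def phi3_def phi4_def using g G al be
    by (intro ext) (simp add: algebra_simps)
  have hc: "h x y u p q = h 0 0 0 p q" for x y u p q by (rule const_xyu[OF sh hx hy hu])
  have LLh: "LL h = 0" using e(2) g unfolding h_def LL_def phi1_def phi2_def phi3_def phi4_def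
    by (simp add: algebra_simps)
  have pqs: "pq_solution h"
    unfolding pq_solution_def
  proof (intro conjI allI)
    show "smooth5 h" by (rule sh)
    show "\<exists>H. h = (\<lambda>x y u p q. H p q)"
      by (rule exI[of _ "\<lambda>p q. h 0 0 0 p q"]) (intro ext, rule hc)
    fix x y u p q
    have "pQ (pP h) = pP (pQ h)" using sh by simp
    then show "(1 + p\<^sup>2) * pP (pP h) x y u p q + 2 * p * q * pQ (pP h) x y u p q
        + (1 + q\<^sup>2) * pQ (pQ h) x y u p q = 0"
      using fn5_eqD[OF LLh, of x y u p q] unfolding LL_def by (simp add: power2_eq_square algebra_simps)
  qed
  have "g = (\<lambda>x y u p q. h x y u p q + c1 * (y * p - x * q)
     + c2 * (x + u * p) + c3 * (y + u * q) + k * (u - x * p - y * q))"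
    unfolding h_def phi1_def phi2_def phi3_def phi4_def by (intro ext) simp
  then show ?thesis using pqs by blast
qed

lemma pq_facts:
  assumes "pq_solution h"
  shows "smooth5 h" "pX h = 0" "pY h = 0" "pU h = 0" "LL h = 0"
proof -
  show sh: "smooth5 h" using assms by (simp add: pq_solution_def)
  obtain H where hH: "h = (\<lambda>x y u p q. H p q)" using assms by (auto simp: pq_solution_def)
  show "pX h = 0" "pY h = 0" "pU h = 0" unfolding hH pX_def pY_def pU_def
    by (auto intro!: ext DERIV_imp_deriv)
  show "LL h = 0"
  proof (intro ext)
    fix x y u p q
    have e: "(1 + p\<^sup>2) * pP (pP h) x y u p q + 2 * p * q * pQ (pP h) x y u p q
        + (1 + q\<^sup>2) * pQ (pQ h) x y u p q = 0" using assms unfolding pq_solution_def by blast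
    have "pQ (pP h) = pP (pQ h)" using sh by simp
    then show "LL h x y u p q = 0 x y u p q" using e unfolding LL_def
      by (simp add: power2_eq_square del: clair)
  qed
qed

lemma zero_mixed:
  assumes h: "smooth5 h" and z: "pX h = 0" "pY h = 0" "pU h = 0"
  shows "pX (pX h) = 0" "pX (pY h) = 0" "pX (pU h) = 0" "pX (pP h) = 0" "pX (pQ h) = 0"
    "pY (pY h) = 0" "pY (pU h) = 0" "pY (pP h) = 0" "pY (pQ h) = 0"
    "pU (pU h) = 0" "pU (pP h) = 0" "pU (pQ h) = 0"
proof -
  have a: "pY (pX h) = 0" "pU (pX h) = 0" "pP (pX h) = 0" "pQ (pX h) = 0" "pU (pY h) = 0"
    "pP (pY h) = 0" "pQ (pY h) = 0" "pP (pU h) = 0" "pQ (pU h) = 0" using z by simp_all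
  show "pX (pX h) = 0" "pY (pY h) = 0" "pU (pU h) = 0" using z by simp_all
  show "pX (pY h) = 0" "pX (pU h) = 0" "pX (pP h) = 0" "pX (pQ h) = 0"
    "pY (pU h) = 0" "pY (pP h) = 0" "pY (pQ h) = 0" "pU (pP h) = 0" "pU (pQ h) = 0"
    using a h by simp_all
qed

lemma rhs_cs:
  assumes hs: "pq_solution h"
  shows "contact_symmetry (\<lambda>x y u p q. h x y u p q + c1 * (y * p - x * q)
     + c2 * (x + u * p) + c3 * (y + u * q) + c4 * (u - x * p - y * q))"
proof -
  note hf = pq_facts[OF hs]
  note zm = zero_mixed[OF hf(1-4)]
  have eq: "(\<lambda>x y u p q. h x y u p q + c1 * (y * p - x * q)
     + c2 * (x + u * p) + c3 * (y + u * q) + c4 * (u - x * p - y * q))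
     = h + cst c1 * phi1 + cst c2 * phi2 + cst c3 * phi3 + cst c4 * phi4"
    unfolding phi1_def phi2_def phi3_def phi4_def by (intro ext) simp
  let ?g = "h + cst c1 * phi1 + cst c2 * phi2 + cst c3 * phi3 + cst c4 * phi4"
  have sg: "smooth5 ?g" using hf by simp
  have "LL ?g = 0" using hf(5) hf(1) unfolding LL_def phi1_def phi2_def phi3_def phi4_def
    by (simp add: algebra_simps)
  moreover have "E0 ?g = 0" unfolding E0_def phi1_def phi2_def phi3_def phi4_def using hf zm
    by (intro ext) (simp add: algebra_simps)
  moreover have "Eq1 ?g = 0" unfolding opdefs phi1_def phi2_def phi3_def phi4_def using hf zm
    by (intro ext) (simp add: algebra_simps)
  moreover have "Eq2 ?g = 0" unfolding opdefs phi1_def phi2_def phi3_def phi4_def using hf zm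
    by (intro ext) (simp add: algebra_simps)
  ultimately have "E0 ?g = 0" "LL ?g = 0" "Eq1 ?g = 0" "Eq2 ?g = 0" by simp_all
  then show ?thesis unfolding eq cs_iff using sg by simp
qed

theorem proposition5:
  shows "{g. contact_symmetry g} =
    {(\<lambda>x y u p q. h x y u p q + c1 * (y * p - x * q) + c2 * (x + u * p)
                 + c3 * (y + u * q) + c4 * (u - x * p - y * q))
     | h c1 c2 c3 c4. pq_solution h}"
proof (intro set_eqI iffI)
  fix g
  assume "g \<in> {g. contact_symmetry g}"
  then have "smooth5 g \<and> E0 g = 0 \<and> LL g = 0 \<and> Eq1 g = 0 \<and> Eq2 g = 0" by (simp add: cs_iff)
  then obtain h c1 c2 c3 c4 where "pq_solution h" and "g = (\<lambda>x y u p q. h x y u p q + c1 * (y * p - x * q)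
     + c2 * (x + u * p) + c3 * (y + u * q) + c4 * (u - x * p - y * q))"
    using classify[of g] by blast
  then show "g \<in> {(\<lambda>x y u p q. h x y u p q + c1 * (y * p - x * q) + c2 * (x + u * p)
                 + c3 * (y + u * q) + c4 * (u - x * p - y * q))
     | h c1 c2 c3 c4. pq_solution h}" by blast
next
  fix g
  assume "g \<in> {(\<lambda>x y u p q. h x y u p q + c1 * (y * p - x * q) + c2 * (x + u * p)
                 + c3 * (y + u * q) + c4 * (u - x * p - y * q))
     | h c1 c2 c3 c4. pq_solution h}"
  then show "g \<in> {g. contact_symmetry g}" using rhs_cs by auto
qed

end
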